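(* Let $a\neq b$ be complex numbers and let $P,Q\in\mathbb{C}[x]$ satisfy $P(a)=P(b)=0$, $Q(a)=Q(b)=0$; put $p=P'$, $q=Q'$. Suppose the Abel equation $y'=p(x)y^3+q(x)y^2$ has a parametric center on $[a,b]$. Then either $P,Q$ satisfy the Composition Condition on $[a,b]$, or both $P$ and $Q$ are non-definite, $P\in Z(Q)$ and $Q\in Z(P)$.
   Context: Let $\mathcal{P}$ be the space of complex polynomials $R$ with $R(a)=R(b)=0$. The equation $y'=p(x)y^3+\epsilon q(x)y^2$ has a center on $[a,b]$ if every solution with $|y(a)|$ sufficiently small satisfies $y(b)=y(a)$ (continuation along the segment $[a,b]$); the equation $y'=p y^3+q y^2$ has a parametric center on $[a,b]$ if for every $\epsilon\in\mathbb{C}$ the equation $y'=p y^3+\epsilon q y^2$ has a center on $[a,b]$. Polynomials $P,Q$ satisfy the Composition Condition on $[a,b]$ if there exist polynomials $\widetilde P,\widetilde Q,W$ with $W(a)=W(b)$ such that $P=\widetilde P\circ W$ and $Q=\widetilde Q\circ W$. For $P\in\mathcal{P}$, $Z(P)$ is the set of $Q\in\mathcal{P}$ such that $\int_a^b P^i(x)Q'(x)\,dx=0$ for all $i\ge 0$. A polynomial $P\in\mathcal{P}$ is ($[a,b]$-)definite if for every $Q\in\mathcal{P}$ with $Q\in Z(P)$, the pair $P,Q$ satisfies the Composition Condition on $[a,b]$; otherwise it is non-definite. *)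

theory Defs
  imports "HOL-Complex_Analysis.Complex_Analysis" "HOL-Computational_Algebra.Polynomial"
begin

definition vanish_ends :: "complex \<Rightarrow> complex \<Rightarrow> complex poly set" where
  "vanish_ends a b = {R. poly R a = 0 \<and> poly R b = 0}"

text \<open>Center of y' = p y^3 + eps q y^2 on the segment [a,b]: solutions are taken
  along the parametrised segment x(t) = a + t (b - a), t in [0,1], so that
  d/dt y(x(t)) = (b - a) * (p(x(t)) y^3 + eps q(x(t)) y^2).\<close>
definition abel_center ::
  "complex poly \<Rightarrow> complex poly \<Rightarrow> complex \<Rightarrow> complex \<Rightarrow> complex \<Rightarrow> bool" where
  "abel_center p q eps a b \<longleftrightarrow>
     (\<exists>\<delta>>0. \<forall>y :: real \<Rightarrow> complex.
        norm (y 0) < \<delta> \<and>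
        (\<forall>t\<in>{0..1}. (y has_vector_derivative
            ((b - a) * (poly p (linepath a b t) * (y t)^3
                        + eps * poly q (linepath a b t) * (y t)^2))) (at t within {0..1}))
        \<longrightarrow> y 1 = y 0)"

definition parametric_center ::
  "complex poly \<Rightarrow> complex poly \<Rightarrow> complex \<Rightarrow> complex \<Rightarrow> bool" where
  "parametric_center p q a b \<longleftrightarrow> (\<forall>eps. abel_center p q eps a b)"

definition composition_condition ::
  "complex poly \<Rightarrow> complex poly \<Rightarrow> complex \<Rightarrow> complex \<Rightarrow> bool" where
  "composition_condition P Q a b \<longleftrightarrow>
     (\<exists>Pt Qt W :: complex poly. poly W a = poly W b \<and> P = pcompose Pt W \<and> Q = pcompose Qt W)"

definition Zset :: "complex poly \<Rightarrow> complex \<Rightarrow> complex \<Rightarrow> complex poly set" where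
  "Zset P a b = {Q \<in> vanish_ends a b.
      \<forall>i::nat. contour_integral (linepath a b) (\<lambda>x. poly (P ^ i * pderiv Q) x) = 0}"

definition definite :: "complex poly \<Rightarrow> complex \<Rightarrow> complex \<Rightarrow> bool" where
  "definite P a b \<longleftrightarrow> P \<in> vanish_ends a b \<and>
     (\<forall>Q \<in> vanish_ends a b. Q \<in> Zset P a b \<longrightarrow> composition_condition P Q a b)"

definition non_definite :: "complex poly \<Rightarrow> complex \<Rightarrow> complex \<Rightarrow> bool" where
  "non_definite P a b \<longleftrightarrow> P \<in> vanish_ends a b \<and> \<not> definite P a b"

end

theory Submission
  imports Defs "HOL-Library.Function_Algebras"
begin


lemma integral_bound_01:
  fixes g :: "real \<Rightarrow> complex"
  assumes "continuous_on {0..1} g" "t \<in> {0..1}" "\<And>s. s \<in> {0..1} \<Longrightarrow> norm (g s) \<le> B"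
  shows "norm (integral {0..t} g) \<le> B"
proof -
  have B: "B \<ge> 0" using assms(3)[of 0] by (meson atLeastAtMost_iff norm_ge_zero order.trans zero_le_one order_refl)
  have "norm (integral {0..t} g) \<le> B * (t - 0)"
    by (rule integral_bound) (use assms in \<open>auto intro: continuous_on_subset\<close>)
  also have "\<dots> \<le> B" using assms(2) B by (simp add: mult_left_le)
  finally show ?thesis .
qed

lemma le_pow_half:
  fixes x c :: real
  assumes "\<And>n. x \<le> c + (1/2)^n"
  shows "x \<le> c"
proof (rule ccontr)
  assume "\<not> x \<le> c"
  then have "0 < x - c" by simp
  then obtain n where "(1/2::real)^n < x - c" using real_arch_pow_inv[of "x - c" "1/2"] by auto
  with assms[of n] show False by simp
qed

lemma unif_geo:
  fixes f :: "nat \<Rightarrow> 'a \<Rightarrow> complex"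
  assumes "\<And>n x. x \<in> S \<Longrightarrow> norm (f n x - g x) \<le> (1/2)^n"
  shows "uniform_limit S f g sequentially"
  unfolding uniform_limit_iff
proof (intro allI impI)
  fix e :: real assume e: "0 < e"
  then obtain N where N: "(1/2::real)^N < e" using real_arch_pow_inv[of e "1/2"] by auto
  show "\<forall>\<^sub>F n in sequentially. \<forall>x\<in>S. dist (f n x) (g x) < e"
    unfolding eventually_sequentially
  proof (intro exI allI impI ballI)
    fix n x assume n: "N \<le> n" and x: "x \<in> S"
    have "(1/2::real)^n \<le> (1/2)^N" using power_decreasing[OF n, of "1/2::real"] by simp
    then show "dist (f n x) (g x) < e" unfolding dist_norm using assms[OF x, of n] N by linarith
  qed
qed

lemma fun_sum_apply: "(\<Sum>i\<in>A. f i) x = (\<Sum>i\<in>A. f i x)"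
  by (induction A rule: infinite_finite_induct) auto

lemma fun_power_apply: "(f ^ n) x = (f x) ^ n"
  by (induction n) auto

lemma poly_sum_le:
  fixes p :: "'a::comm_semiring_1 poly"
  assumes "degree p \<le> n"
  shows "poly p x = (\<Sum>i\<le>n. coeff p i * x ^ i)"
proof -
  have "poly p x = (\<Sum>i\<le>degree p. coeff p i * x ^ i)" by (rule poly_altdef)
  also have "\<dots> = (\<Sum>i\<le>n. coeff p i * x ^ i)"
    by (rule sum.mono_neutral_left) (use assms in \<open>auto simp: coeff_eq_0\<close>)
  finally show ?thesis .
qed

definition CC :: "(real \<Rightarrow> complex) poly \<Rightarrow> bool" where
  "CC F \<longleftrightarrow> (\<forall>i. continuous_on {0..1} (coeff F i))"

lemma CC_add: "CC F \<Longrightarrow> CC G \<Longrightarrow> CC (F + G)"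
  unfolding CC_def by (auto simp: plus_fun_def intro!: continuous_intros)

lemma CC_mult: "CC F \<Longrightarrow> CC G \<Longrightarrow> CC (F * G)"
  unfolding CC_def coeff_mult
proof (intro allI)
  fix n assume F: "\<forall>i. continuous_on {0..1} (coeff F i)" and G: "\<forall>i. continuous_on {0..1} (coeff G i)"
  have eq: "(\<Sum>i\<le>n. coeff F i * coeff G (n - i)) = (\<lambda>t. \<Sum>i\<le>n. coeff F i t * coeff G (n - i) t)"
    by (rule ext) (simp add: fun_sum_apply)
  have "continuous_on {0..1} (\<lambda>t. \<Sum>i\<le>n. coeff F i t * coeff G (n - i) t)" using F G by (intro continuous_intros) auto
  then show "continuous_on {0..1} (\<Sum>i\<le>n. coeff F i * coeff G (n - i))" by (simp only: eq)
qed

lemma CC_power: "CC F \<Longrightarrow> CC (F ^ n)"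
proof (induction n)
  case 0 then show ?case unfolding CC_def by (auto simp: coeff_1 one_fun_def zero_fun_def)
next
  case (Suc n) then show ?case by (simp add: CC_mult)
qed

lemma CC_one: "CC 1"
  unfolding CC_def by (auto simp: coeff_1 one_fun_def zero_fun_def)

lemma CC_const: "continuous_on {0..1} c \<Longrightarrow> CC [:c:]"
  unfolding CC_def by (auto simp: coeff_pCons split: nat.split simp: zero_fun_def)

lemma CC_X: "continuous_on {0..1} c \<Longrightarrow> CC [:0, c:]"
  unfolding CC_def by (auto simp: coeff_pCons split: nat.split simp: zero_fun_def)

definition Intf :: "(real \<Rightarrow> complex) \<Rightarrow> real \<Rightarrow> complex" where
  "Intf f = (\<lambda>t. integral {0..t} f)"

lemma Intf_0: "Intf 0 = 0"
  unfolding Intf_def by (rule ext) (simp add: zero_fun_def)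

definition IntP :: "(real \<Rightarrow> complex) poly \<Rightarrow> (real \<Rightarrow> complex) poly" where
  "IntP F = map_poly Intf F"

lemma coeff_IntP: "coeff (IntP F) i = Intf (coeff F i)"
  unfolding IntP_def by (simp add: coeff_map_poly Intf_0)

lemma CC_IntP: "CC F \<Longrightarrow> CC (IntP F)"
  unfolding CC_def coeff_IntP Intf_def
  by (auto intro!: indefinite_integral_continuous_1 integrable_continuous_real)

lemma poly_fun_eval_le:
  fixes F :: "(real \<Rightarrow> complex) poly"
  assumes "degree F \<le> n"
  shows "poly F (\<lambda>_. \<beta>) t = (\<Sum>i\<le>n. coeff F i t * \<beta> ^ i)"
proof -
  have "poly F (\<lambda>_. \<beta>) = (\<Sum>i\<le>n. coeff F i * (\<lambda>_. \<beta>) ^ i)" by (rule poly_sum_le[OF assms])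
  then show ?thesis by (simp add: fun_sum_apply fun_power_apply)
qed

lemma poly_fun_eval:
  fixes F :: "(real \<Rightarrow> complex) poly"
  shows "poly F (\<lambda>_. \<beta>) t = (\<Sum>i\<le>degree F. coeff F i t * \<beta> ^ i)"
  by (rule poly_fun_eval_le) simp

lemma poly_IntP:
  assumes "CC F" "t \<in> {0..1}"
  shows "poly (IntP F) (\<lambda>_. \<beta>) t = integral {0..t} (\<lambda>s. poly F (\<lambda>_. \<beta>) s)"
proof -
  have deg: "degree (IntP F) \<le> degree F"
    by (rule degree_le) (auto simp: coeff_IntP Intf_0 coeff_eq_0)
  have sub: "{0..t} \<subseteq> {0..1}" using assms(2) by auto
  have int: "(coeff F i) integrable_on {0..t}" for i
    using assms(1) unfolding CC_def
    by (blast intro: integrable_continuous_real continuous_on_subset[OF _ sub])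
  have "poly (IntP F) (\<lambda>_. \<beta>) t = (\<Sum>i\<le>degree F. coeff (IntP F) i t * \<beta> ^ i)"
    by (rule poly_fun_eval_le[OF deg])
  also have "\<dots> = (\<Sum>i\<le>degree F. integral {0..t} (\<lambda>s. coeff F i s * \<beta> ^ i))"
  proof (rule sum.cong[OF refl])
    fix i
    show "coeff (IntP F) i t * \<beta> ^ i = integral {0..t} (\<lambda>s. coeff F i s * \<beta> ^ i)"
      unfolding coeff_IntP Intf_def by (rule integral_mult_left[symmetric])
  qed
  also have "\<dots> = integral {0..t} (\<lambda>s. \<Sum>i\<le>degree F. coeff F i s * \<beta> ^ i)"
  proof (rule integral_sum[symmetric])
    show "finite {..degree F}" by simp
    fix i show "(\<lambda>s. coeff F i s * \<beta> ^ i) integrable_on {0..t}"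
      by (rule integrable_on_mult_left) (rule int)
  qed
  also have "\<dots> = integral {0..t} (\<lambda>s. poly F (\<lambda>_. \<beta>) s)"
    by (simp only: poly_fun_eval)
  finally show ?thesis .
qed

locale odeloc =
  fixes pt qt :: "real \<Rightarrow> complex" and Mp Mq :: real
  assumes cpt: "continuous_on {0..1} pt" and cqt: "continuous_on {0..1} qt"
    and bp: "\<And>s. s \<in> {0..1} \<Longrightarrow> norm (pt s) \<le> Mp"
    and bq: "\<And>s. s \<in> {0..1} \<Longrightarrow> norm (qt s) \<le> Mq"
    and Mp1: "Mp \<ge> 1" and Mq1: "Mq \<ge> 1"
begin

definition Fn :: "complex \<Rightarrow> complex \<Rightarrow> real \<Rightarrow> complex \<Rightarrow> complex" where
  "Fn \<alpha> \<beta> s z = \<alpha> * pt s * z^3 + \<beta> * qt s * z^2"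

definition T :: "complex \<Rightarrow> complex \<Rightarrow> (real \<Rightarrow> complex) \<Rightarrow> real \<Rightarrow> complex" where
  "T \<alpha> \<beta> y = (\<lambda>t. 1 + integral {0..t} (\<lambda>s. Fn \<alpha> \<beta> s (y s)))"

primrec it :: "complex \<Rightarrow> complex \<Rightarrow> nat \<Rightarrow> real \<Rightarrow> complex" where
  "it \<alpha> \<beta> 0 = (\<lambda>t. 1)"
| "it \<alpha> \<beta> (Suc n) = T \<alpha> \<beta> (it \<alpha> \<beta> n)"

definition w :: "complex \<Rightarrow> complex \<Rightarrow> real \<Rightarrow> complex" where
  "w \<alpha> \<beta> t = lim (\<lambda>n. it \<alpha> \<beta> n t)"

definition good :: "complex \<Rightarrow> complex \<Rightarrow> bool" where
  "good \<alpha> \<beta> \<longleftrightarrow> norm \<alpha> \<le> 1/(27*Mp) \<and> norm \<beta> \<le> 1/(12*Mq)"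

definition inB :: "(real \<Rightarrow> complex) \<Rightarrow> bool" where
  "inB y \<longleftrightarrow> continuous_on {0..1} y \<and> (\<forall>t\<in>{0..1}. norm (y t - 1) \<le> 1/2)"

definition pd :: "complex \<Rightarrow> complex \<Rightarrow> complex \<Rightarrow> complex \<Rightarrow> real" where
  "pd \<alpha> \<beta> \<alpha>' \<beta>' = norm (\<alpha> - \<alpha>') * Mp * (27/8) + norm (\<beta> - \<beta>') * Mq * (9/4)"

lemma ball_norm: "norm (z - 1) \<le> 1/2 \<Longrightarrow> norm (z::complex) \<le> 3/2"
  using norm_triangle_ineq[of "z-1" 1] by simp

lemma Fn_bound:
  assumes "good \<alpha> \<beta>" "norm (z - 1) \<le> 1/2" "s \<in> {0..1}"
  shows "norm (Fn \<alpha> \<beta> s z) \<le> 1/2"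
proof -
  have z: "norm z \<le> 3/2" using ball_norm assms(2) .
  have "norm z ^ 3 \<le> (3/2)^3" by (intro power_mono z norm_ge_zero)
  also have "(3/2::real)^3 = 27/8" by (simp add: power3_eq_cube)
  finally have z3: "norm (z^3) \<le> 27/8" by (simp only: norm_power)
  have "norm z ^ 2 \<le> (3/2)^2" by (intro power_mono z norm_ge_zero)
  also have "(3/2::real)^2 = 9/4" by (simp add: power2_eq_square)
  finally have z2: "norm (z^2) \<le> 9/4" by (simp only: norm_power)
  have a: "norm \<alpha> * Mp \<le> 1/27" using assms(1) Mp1 unfolding good_def
    by (simp add: field_simps)
  have b: "norm \<beta> * Mq \<le> 1/12" using assms(1) Mq1 unfolding good_def
    by (simp add: field_simps)
  have "norm (\<alpha> * pt s * z^3) \<le> (norm \<alpha> * Mp) * (27/8)"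
    unfolding norm_mult using bp[OF assms(3)] z3
    using Mp1 Mq1 by (intro mult_mono) (auto intro: mult_left_mono)
  also have "\<dots> \<le> 1/8" using a by (simp add: algebra_simps)
  finally have 1: "norm (\<alpha> * pt s * z^3) \<le> 1/8" .
  have "norm (\<beta> * qt s * z^2) \<le> (norm \<beta> * Mq) * (9/4)"
    unfolding norm_mult using bq[OF assms(3)] z2
    using Mp1 Mq1 by (intro mult_mono) (auto intro: mult_left_mono)
  also have "\<dots> \<le> 3/16" using b by (simp add: algebra_simps)
  finally have 2: "norm (\<beta> * qt s * z^2) \<le> 3/16" .
  show ?thesis unfolding Fn_def using norm_triangle_ineq[of "\<alpha> * pt s * z^3" "\<beta> * qt s * z^2"] 1 2
    by linarith
qed

lemma Fn_lip:
  assumes "good \<alpha> \<beta>" "norm (z - 1) \<le> 1/2" "norm (z' - 1) \<le> 1/2" "s \<in> {0..1}"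
  shows "norm (Fn \<alpha> \<beta> s z - Fn \<alpha> \<beta> s z') \<le> 1/2 * norm (z - z')"
proof -
  have z: "norm z \<le> 3/2" using ball_norm assms(2) .
  have z': "norm z' \<le> 3/2" using ball_norm assms(3) .
  have e3: "z^3 - z'^3 = (z - z') * (z^2 + z*z' + z'^2)" by (simp add: algebra_simps power2_eq_square power3_eq_cube)
  have e2: "z^2 - z'^2 = (z - z') * (z + z')" by (simp add: algebra_simps power2_eq_square)
  have n1: "norm (z^2 + z*z' + z'^2) \<le> 27/4"
  proof -
    have "norm (z^2 + z*z' + z'^2) \<le> norm z * norm z + norm z * norm z' + norm z' * norm z'"
      by (metis norm_mult norm_triangle_le norm_triangle_ineq power2_eq_square add_mono order_refl)
    also have "\<dots> \<le> (3/2)*(3/2) + (3/2)*(3/2) + (3/2)*(3/2)"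
      using z z' by (intro add_mono mult_mono) auto
    finally show ?thesis by simp
  qed
  have n2: "norm (z + z') \<le> 3" using z z' norm_triangle_ineq[of z z'] by simp
  have a: "norm \<alpha> * Mp \<le> 1/27" using assms(1) Mp1 unfolding good_def
    by (simp add: field_simps)
  have b: "norm \<beta> * Mq \<le> 1/12" using assms(1) Mq1 unfolding good_def
    by (simp add: field_simps)
  have "Fn \<alpha> \<beta> s z - Fn \<alpha> \<beta> s z' = \<alpha> * pt s * (z^3 - z'^3) + \<beta> * qt s * (z^2 - z'^2)"
    unfolding Fn_def by (simp add: algebra_simps)
  also have "\<dots> = (z - z') * (\<alpha> * pt s * (z^2 + z*z' + z'^2) + \<beta> * qt s * (z + z'))"
    unfolding e3 e2 by (simp add: algebra_simps)
  finally have eq: "Fn \<alpha> \<beta> s z - Fn \<alpha> \<beta> s z' = (z - z') * (\<alpha> * pt s * (z^2 + z*z' + z'^2) + \<beta> * qt s * (z + z'))" .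
  have "norm (\<alpha> * pt s * (z^2 + z*z' + z'^2)) \<le> (norm \<alpha> * Mp) * (27/4)"
    unfolding norm_mult using bp[OF assms(4)] n1 Mp1
    by (intro mult_mono) (auto intro: mult_left_mono)
  also have "\<dots> \<le> 1/4" using a by (simp add: algebra_simps)
  finally have 1: "norm (\<alpha> * pt s * (z^2 + z*z' + z'^2)) \<le> 1/4" .
  have "norm (\<beta> * qt s * (z + z')) \<le> (norm \<beta> * Mq) * 3"
    unfolding norm_mult using bq[OF assms(4)] n2 Mq1
    by (intro mult_mono) (auto intro: mult_left_mono)
  also have "\<dots> \<le> 1/4" using b by (simp add: algebra_simps)
  finally have 2: "norm (\<beta> * qt s * (z + z')) \<le> 1/4" .
  have "norm (\<alpha> * pt s * (z^2 + z*z' + z'^2) + \<beta> * qt s * (z + z')) \<le> 1/2"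
    using norm_triangle_ineq[of "\<alpha> * pt s * (z^2 + z*z' + z'^2)" "\<beta> * qt s * (z + z')"] 1 2 by linarith
  then have "norm (z - z') * norm (\<alpha> * pt s * (z^2 + z*z' + z'^2) + \<beta> * qt s * (z + z')) \<le> norm (z - z') * (1/2)"
    by (rule mult_left_mono) simp
  then show ?thesis unfolding eq norm_mult by (simp add: mult.commute)
qed

lemma Fn_param:
  assumes "norm (z - 1) \<le> 1/2" "s \<in> {0..1}"
  shows "norm (Fn \<alpha> \<beta> s z - Fn \<alpha>' \<beta>' s z) \<le> pd \<alpha> \<beta> \<alpha>' \<beta>'"
proof -
  have z: "norm z \<le> 3/2" using ball_norm assms(1) .
  have "norm z ^ 3 \<le> (3/2)^3" by (intro power_mono z norm_ge_zero)
  also have "(3/2::real)^3 = 27/8" by (simp add: power3_eq_cube)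
  finally have z3: "norm (z^3) \<le> 27/8" by (simp only: norm_power)
  have "norm z ^ 2 \<le> (3/2)^2" by (intro power_mono z norm_ge_zero)
  also have "(3/2::real)^2 = 9/4" by (simp add: power2_eq_square)
  finally have z2: "norm (z^2) \<le> 9/4" by (simp only: norm_power)
  have eq: "Fn \<alpha> \<beta> s z - Fn \<alpha>' \<beta>' s z = (\<alpha> - \<alpha>') * pt s * z^3 + (\<beta> - \<beta>') * qt s * z^2"
    unfolding Fn_def by (simp add: algebra_simps)
  have 1: "norm ((\<alpha> - \<alpha>') * pt s * z^3) \<le> norm (\<alpha> - \<alpha>') * Mp * (27/8)"
    unfolding norm_mult using bp[OF assms(2)] z3 Mp1
    by (intro mult_mono) (auto intro: mult_left_mono)
  have 2: "norm ((\<beta> - \<beta>') * qt s * z^2) \<le> norm (\<beta> - \<beta>') * Mq * (9/4)"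
    unfolding norm_mult using bq[OF assms(2)] z2 Mq1
    by (intro mult_mono) (auto intro: mult_left_mono)
  show ?thesis unfolding eq pd_def
    using norm_triangle_ineq[of "(\<alpha> - \<alpha>') * pt s * z^3" "(\<beta> - \<beta>') * qt s * z^2"] 1 2 by linarith
qed

lemma Fn_cont:
  assumes "continuous_on {0..1} y"
  shows "continuous_on {0..1} (\<lambda>s. Fn \<alpha> \<beta> s (y s))"
  unfolding Fn_def using assms cpt cqt by (intro continuous_intros) auto

lemma T_cont:
  assumes "continuous_on {0..1} y"
  shows "continuous_on {0..1} (T \<alpha> \<beta> y)"
  unfolding T_def
  by (intro continuous_intros indefinite_integral_continuous_1 integrable_continuous_real Fn_cont assms)

lemma T_0: "T \<alpha> \<beta> y 0 = 1"
  unfolding T_def by simp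

lemma T_inB:
  assumes "good \<alpha> \<beta>" "inB y"
  shows "inB (T \<alpha> \<beta> y)"
  unfolding inB_def
proof safe
  show "continuous_on {0..1} (T \<alpha> \<beta> y)" using assms(2) T_cont inB_def by blast
  fix t :: real assume t: "t \<in> {0..1}"
  have "norm (integral {0..t} (\<lambda>s. Fn \<alpha> \<beta> s (y s))) \<le> 1/2"
    by (rule integral_bound_01[OF Fn_cont t]) (use assms Fn_bound inB_def in auto)
  then show "norm (T \<alpha> \<beta> y t - 1) \<le> 1/2" unfolding T_def by simp
qed

lemma T_contr:
  assumes "good \<alpha> \<beta>" "inB y" "inB z" "\<And>s. s \<in> {0..1} \<Longrightarrow> norm (y s - z s) \<le> d" "t \<in> {0..1}"
  shows "norm (T \<alpha> \<beta> y t - T \<alpha> \<beta> z t) \<le> d/2"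
proof -
  have cy: "continuous_on {0..1} y" and cz: "continuous_on {0..1} z" using assms inB_def by auto
  have "T \<alpha> \<beta> y t - T \<alpha> \<beta> z t = integral {0..t} (\<lambda>s. Fn \<alpha> \<beta> s (y s) - Fn \<alpha> \<beta> s (z s))"
    unfolding T_def using assms(5)
    by (simp add: integral_diff integrable_continuous_real continuous_on_subset[OF Fn_cont[OF cy]] continuous_on_subset[OF Fn_cont[OF cz]])
  also have "norm \<dots> \<le> d/2"
  proof (rule integral_bound_01[OF _ assms(5)])
    show "continuous_on {0..1} (\<lambda>s. Fn \<alpha> \<beta> s (y s) - Fn \<alpha> \<beta> s (z s))"
      by (intro continuous_intros Fn_cont cy cz)
    fix s :: real assume s: "s \<in> {0..1}"
    have "norm (Fn \<alpha> \<beta> s (y s) - Fn \<alpha> \<beta> s (z s)) \<le> 1/2 * norm (y s - z s)"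
      by (rule Fn_lip) (use assms s inB_def in auto)
    also have "\<dots> \<le> d/2" using assms(4)[OF s] by simp
    finally show "norm (Fn \<alpha> \<beta> s (y s) - Fn \<alpha> \<beta> s (z s)) \<le> d/2" .
  qed
  finally show ?thesis .
qed

lemma T_param:
  assumes "inB y" "t \<in> {0..1}"
  shows "norm (T \<alpha> \<beta> y t - T \<alpha>' \<beta>' y t) \<le> pd \<alpha> \<beta> \<alpha>' \<beta>'"
proof -
  have cy: "continuous_on {0..1} y" using assms inB_def by auto
  have "T \<alpha> \<beta> y t - T \<alpha>' \<beta>' y t = integral {0..t} (\<lambda>s. Fn \<alpha> \<beta> s (y s) - Fn \<alpha>' \<beta>' s (y s))"
    unfolding T_def using assms(2)
    by (simp add: integral_diff integrable_continuous_real continuous_on_subset[OF Fn_cont[OF cy]])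
  also have "norm \<dots> \<le> pd \<alpha> \<beta> \<alpha>' \<beta>'"
  proof (rule integral_bound_01[OF _ assms(2)])
    show "continuous_on {0..1} (\<lambda>s. Fn \<alpha> \<beta> s (y s) - Fn \<alpha>' \<beta>' s (y s))"
      by (intro continuous_intros Fn_cont cy)
    fix s :: real assume s: "s \<in> {0..1}"
    show "norm (Fn \<alpha> \<beta> s (y s) - Fn \<alpha>' \<beta>' s (y s)) \<le> pd \<alpha> \<beta> \<alpha>' \<beta>'"
      by (rule Fn_param) (use assms s inB_def in auto)
  qed
  finally show ?thesis .
qed

lemma it_inB: "good \<alpha> \<beta> \<Longrightarrow> inB (it \<alpha> \<beta> n)"
proof (induction n)
  case 0 then show ?case by (simp add: inB_def)
next
  case (Suc n) then show ?case by (simp add: T_inB)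
qed

lemma it_0: "it \<alpha> \<beta> n 0 = 1"
  by (cases n) (auto simp: T_0)

lemma it_step:
  assumes "good \<alpha> \<beta>" "t \<in> {0..1}"
  shows "norm (it \<alpha> \<beta> (Suc n) t - it \<alpha> \<beta> n t) \<le> (1/2)^(Suc n)"
  using assms(2)
proof (induction n arbitrary: t)
  case 0
  then show ?case using it_inB[OF assms(1), of 1] by (simp add: inB_def)
next
  case (Suc n)
  have "norm (T \<alpha> \<beta> (it \<alpha> \<beta> (Suc n)) t - T \<alpha> \<beta> (it \<alpha> \<beta> n) t) \<le> (1/2)^(Suc n) / 2"
    by (rule T_contr[OF assms(1) it_inB[OF assms(1)] it_inB[OF assms(1)] Suc.IH Suc.prems])
  then show ?case by simp
qed

lemma it_cauchy:
  assumes "good \<alpha> \<beta>" "t \<in> {0..1}" "n \<le> m"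
  shows "norm (it \<alpha> \<beta> m t - it \<alpha> \<beta> n t) \<le> (1/2)^n - (1/2)^m"
  using assms(3)
proof (induction m rule: dec_induct)
  case base then show ?case by simp
next
  case (step m)
  have "norm (it \<alpha> \<beta> (Suc m) t - it \<alpha> \<beta> n t) \<le> norm (it \<alpha> \<beta> (Suc m) t - it \<alpha> \<beta> m t) + norm (it \<alpha> \<beta> m t - it \<alpha> \<beta> n t)"
    using norm_triangle_ineq[of "it \<alpha> \<beta> (Suc m) t - it \<alpha> \<beta> m t" "it \<alpha> \<beta> m t - it \<alpha> \<beta> n t"] by simp
  also have "\<dots> \<le> (1/2)^(Suc m) + ((1/2)^n - (1/2)^m)"
    using it_step[OF assms(1,2), of m] step.IH by linarith
  finally show ?case by simp
qed

lemma it_conv: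
  assumes "good \<alpha> \<beta>" "t \<in> {0..1}"
  shows "(\<lambda>n. it \<alpha> \<beta> n t) \<longlonglongrightarrow> w \<alpha> \<beta> t"
    and "norm (w \<alpha> \<beta> t - it \<alpha> \<beta> n t) \<le> (1/2)^n"
proof -
  have "Cauchy (\<lambda>n. it \<alpha> \<beta> n t)"
  proof (rule metric_CauchyI)
    fix e :: real assume e: "0 < e"
    then obtain N where N: "(1/2::real)^N < e" using real_arch_pow_inv[of e "1/2"] by auto
    show "\<exists>M. \<forall>m\<ge>M. \<forall>n\<ge>M. dist (it \<alpha> \<beta> m t) (it \<alpha> \<beta> n t) < e"
    proof (intro exI allI impI)
      fix m n assume m: "N \<le> m" and n: "N \<le> n"
      have "dist (it \<alpha> \<beta> m t) (it \<alpha> \<beta> n t) \<le> (1/2)^N"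
      proof (cases "n \<le> m")
        case True
        have "norm (it \<alpha> \<beta> m t - it \<alpha> \<beta> n t) \<le> (1/2)^n - (1/2)^m" by (rule it_cauchy[OF assms True])
        also have "\<dots> \<le> (1/2)^N" using power_decreasing[OF n, of "1/2::real"] zero_le_power[of "1/2::real" m] by linarith
        finally show ?thesis by (simp add: dist_norm)
      next
        case False
        have "norm (it \<alpha> \<beta> n t - it \<alpha> \<beta> m t) \<le> (1/2)^m - (1/2)^n" by (rule it_cauchy[OF assms]) (use False in simp)
        also have "\<dots> \<le> (1/2)^N" using power_decreasing[OF m, of "1/2::real"] zero_le_power[of "1/2::real" n] by linarith
        finally show ?thesis by (simp add: dist_norm norm_minus_commute)
      qed
      then show "dist (it \<alpha> \<beta> m t) (it \<alpha> \<beta> n t) < e" using N by simp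
    qed
  qed
  then show lim: "(\<lambda>n. it \<alpha> \<beta> n t) \<longlonglongrightarrow> w \<alpha> \<beta> t"
    unfolding w_def using Cauchy_convergent convergent_LIMSEQ_iff by blast
  have "(\<lambda>m. norm (it \<alpha> \<beta> m t - it \<alpha> \<beta> n t)) \<longlonglongrightarrow> norm (w \<alpha> \<beta> t - it \<alpha> \<beta> n t)"
    by (intro tendsto_intros lim)
  moreover have "\<forall>m\<ge>n. norm (it \<alpha> \<beta> m t - it \<alpha> \<beta> n t) \<le> (1/2)^n"
  proof (intro allI impI)
    fix m assume "n \<le> m"
    then show "norm (it \<alpha> \<beta> m t - it \<alpha> \<beta> n t) \<le> (1/2)^n"
      using it_cauchy[OF assms \<open>n \<le> m\<close>] zero_le_power[of "1/2::real" m] by linarith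
  qed
  ultimately show "norm (w \<alpha> \<beta> t - it \<alpha> \<beta> n t) \<le> (1/2)^n" by (rule Lim_bounded)
qed

lemma w_unif: "good \<alpha> \<beta> \<Longrightarrow> uniform_limit {0..1} (it \<alpha> \<beta>) (w \<alpha> \<beta>) sequentially"
  by (rule unif_geo) (use it_conv(2) in \<open>auto simp: norm_minus_commute\<close>)

lemma w_inB:
  assumes "good \<alpha> \<beta>"
  shows "inB (w \<alpha> \<beta>)"
  unfolding inB_def
proof safe
  show "continuous_on {0..1} (w \<alpha> \<beta>)"
    by (rule uniform_limit_theorem[OF _ w_unif[OF assms]]) (use it_inB[OF assms] inB_def in auto)
  fix t :: real assume t: "t \<in> {0..1}"
  have "(\<lambda>n. norm (it \<alpha> \<beta> n t - 1)) \<longlonglongrightarrow> norm (w \<alpha> \<beta> t - 1)"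
    by (intro tendsto_intros it_conv(1)[OF assms t])
  moreover have "\<forall>n\<ge>0. norm (it \<alpha> \<beta> n t - 1) \<le> 1/2"
    using it_inB[OF assms] t inB_def by auto
  ultimately show "norm (w \<alpha> \<beta> t - 1) \<le> 1/2" by (rule Lim_bounded)
qed

lemma w_fix:
  assumes "good \<alpha> \<beta>" "t \<in> {0..1}"
  shows "T \<alpha> \<beta> (w \<alpha> \<beta>) t = w \<alpha> \<beta> t"
proof -
  have "norm (T \<alpha> \<beta> (w \<alpha> \<beta>) t - w \<alpha> \<beta> t) \<le> 0 + (1/2)^n" for n
  proof -
    have "norm (T \<alpha> \<beta> (w \<alpha> \<beta>) t - T \<alpha> \<beta> (it \<alpha> \<beta> n) t) \<le> (1/2)^n/2"
      by (rule T_contr[OF assms(1) w_inB[OF assms(1)] it_inB[OF assms(1)] _ assms(2)])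
         (rule it_conv(2)[OF assms(1)])
    moreover have "norm (it \<alpha> \<beta> (Suc n) t - w \<alpha> \<beta> t) \<le> (1/2)^(Suc n)"
      using it_conv(2)[OF assms, of "Suc n"] by (simp add: norm_minus_commute)
    moreover have "norm (T \<alpha> \<beta> (w \<alpha> \<beta>) t - w \<alpha> \<beta> t) \<le> norm (T \<alpha> \<beta> (w \<alpha> \<beta>) t - T \<alpha> \<beta> (it \<alpha> \<beta> n) t) + norm (it \<alpha> \<beta> (Suc n) t - w \<alpha> \<beta> t)"
      using norm_triangle_ineq[of "T \<alpha> \<beta> (w \<alpha> \<beta>) t - T \<alpha> \<beta> (it \<alpha> \<beta> n) t" "it \<alpha> \<beta> (Suc n) t - w \<alpha> \<beta> t"]
      by simp
    ultimately show ?thesis by simp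
  qed
  then have "norm (T \<alpha> \<beta> (w \<alpha> \<beta>) t - w \<alpha> \<beta> t) \<le> 0" by (rule le_pow_half)
  then show ?thesis by simp
qed

lemma w_0: "good \<alpha> \<beta> \<Longrightarrow> w \<alpha> \<beta> 0 = 1"
  using it_conv(1)[of \<alpha> \<beta> 0] by (simp add: it_0 LIMSEQ_const_iff)

lemma pd_nonneg: "pd \<alpha> \<beta> \<alpha>' \<beta>' \<ge> 0"
  unfolding pd_def using Mp1 Mq1 by (intro add_nonneg_nonneg mult_nonneg_nonneg) auto

lemma fix_stab:
  assumes g1: "good \<alpha> \<beta>" and g2: "good \<alpha>' \<beta>'" and y: "inB y" and z: "inB z"
    and fy: "\<And>t. t \<in> {0..1} \<Longrightarrow> T \<alpha> \<beta> y t = y t"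
    and fz: "\<And>t. t \<in> {0..1} \<Longrightarrow> T \<alpha>' \<beta>' z t = z t"
    and t: "t \<in> {0..1}"
  shows "norm (y t - z t) \<le> 2 * pd \<alpha> \<beta> \<alpha>' \<beta>'"
proof -
  let ?e = "pd \<alpha> \<beta> \<alpha>' \<beta>'"
  have "\<forall>t\<in>{0..1}. norm (y t - z t) \<le> 2 * ?e + (1/2)^k" for k
  proof (induction k)
    case 0
    show ?case
    proof
      fix t :: real assume t: "t \<in> {0..1}"
      have "norm (y t - z t) \<le> norm (y t - 1) + norm (z t - 1)"
        using norm_triangle_ineq4[of "y t - 1" "z t - 1"] by simp
      also have "\<dots> \<le> 1"
      proof -
        have "norm (y t - 1) \<le> 1/2" "norm (z t - 1) \<le> 1/2" using y z t unfolding inB_def by auto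
        then show ?thesis by linarith
      qed
      finally show "norm (y t - z t) \<le> 2 * ?e + (1/2)^0" using pd_nonneg[of \<alpha> \<beta> \<alpha>' \<beta>'] by simp
    qed
  next
    case (Suc k)
    show ?case
    proof
      fix t :: real assume t: "t \<in> {0..1}"
      have "norm (T \<alpha> \<beta> y t - T \<alpha> \<beta> z t) \<le> (2 * ?e + (1/2)^k)/2"
        by (rule T_contr[OF g1 y z _ t]) (use Suc.IH in auto)
      moreover have "norm (T \<alpha> \<beta> z t - T \<alpha>' \<beta>' z t) \<le> ?e" by (rule T_param[OF z t])
      moreover have "norm (y t - z t) \<le> norm (T \<alpha> \<beta> y t - T \<alpha> \<beta> z t) + norm (T \<alpha> \<beta> z t - T \<alpha>' \<beta>' z t)"
        using fy[OF t] fz[OF t] norm_triangle_ineq[of "T \<alpha> \<beta> y t - T \<alpha> \<beta> z t" "T \<alpha> \<beta> z t - T \<alpha>' \<beta>' z t"]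
        by simp
      moreover have "(2 * ?e + (1/2)^k)/2 + ?e = 2*?e + (1/2::real)^Suc k" by (simp add: field_simps)
      ultimately show "norm (y t - z t) \<le> 2 * ?e + (1/2)^Suc k" by linarith
    qed
  qed
  then have "\<And>k. norm (y t - z t) \<le> 2 * ?e + (1/2)^k" using t by blast
  then show ?thesis by (rule le_pow_half)
qed

lemma w_stab:
  assumes "good \<alpha> \<beta>" "good \<alpha>' \<beta>'" "t \<in> {0..1}"
  shows "norm (w \<alpha> \<beta> t - w \<alpha>' \<beta>' t) \<le> 2 * pd \<alpha> \<beta> \<alpha>' \<beta>'"
  by (rule fix_stab[OF assms(1,2) w_inB[OF assms(1)] w_inB[OF assms(2)] w_fix[OF assms(1)] w_fix[OF assms(2)] assms(3)])

lemma w_unique: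
  assumes "good \<alpha> \<beta>" "inB z" "\<And>t. t \<in> {0..1} \<Longrightarrow> T \<alpha> \<beta> z t = z t" "t \<in> {0..1}"
  shows "w \<alpha> \<beta> t = z t"
  using fix_stab[OF assms(1,1) w_inB[OF assms(1)] assms(2) w_fix[OF assms(1)] assms(3,4)]
  by (simp add: pd_def)

lemma w_deriv:
  assumes "good \<alpha> \<beta>" "t \<in> {0..1}"
  shows "(w \<alpha> \<beta> has_vector_derivative Fn \<alpha> \<beta> t (w \<alpha> \<beta> t)) (at t within {0..1})"
proof -
  have c: "continuous_on {0..1} (w \<alpha> \<beta>)" using w_inB[OF assms(1)] inB_def by auto
  have "((\<lambda>t. 1 + integral {0..t} (\<lambda>s. Fn \<alpha> \<beta> s (w \<alpha> \<beta> s))) has_vector_derivative 0 + Fn \<alpha> \<beta> t (w \<alpha> \<beta> t)) (at t within {0..1})"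
    by (intro derivative_intros integral_has_vector_derivative Fn_cont c assms(2))
  then have "(T \<alpha> \<beta> (w \<alpha> \<beta>) has_vector_derivative Fn \<alpha> \<beta> t (w \<alpha> \<beta> t)) (at t within {0..1})"
    unfolding T_def by simp
  then show ?thesis
    by (rule has_vector_derivative_transform[OF assms(2), rotated]) (use w_fix[OF assms(1)] in auto)
qed

lemma it_poly: "\<exists>F. CC F \<and> (\<forall>\<beta>. \<forall>t\<in>{0..1}. it \<alpha> \<beta> n t = poly F (\<lambda>_. \<beta>) t)"
proof (induction n)
  case 0
  show ?case by (rule exI[of _ 1]) (simp add: CC_one)
next
  case (Suc n)
  then obtain F where F: "CC F" "\<And>\<beta> t. t \<in> {0..1} \<Longrightarrow> it \<alpha> \<beta> n t = poly F (\<lambda>_. \<beta>) t" by blast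
  define G where "G = [:(\<lambda>s. \<alpha> * pt s):] * F^3 + [:0, qt:] * F^2"
  have CG: "CC G" unfolding G_def
    by (intro CC_add CC_mult CC_power CC_const CC_X F(1) cqt continuous_intros cpt)
  have evG: "poly G (\<lambda>_. \<beta>) s = Fn \<alpha> \<beta> s (poly F (\<lambda>_. \<beta>) s)" for \<beta> s
    unfolding G_def Fn_def by (simp add: fun_power_apply algebra_simps)
  show ?case
  proof (intro exI conjI allI ballI)
    show "CC (1 + IntP G)" by (intro CC_add CC_one CC_IntP CG)
    fix \<beta> and t :: real assume t: "t \<in> {0..1}"
    have "it \<alpha> \<beta> (Suc n) t = 1 + integral {0..t} (\<lambda>s. Fn \<alpha> \<beta> s (it \<alpha> \<beta> n s))"
      by (simp add: T_def)
    also have "integral {0..t} (\<lambda>s. Fn \<alpha> \<beta> s (it \<alpha> \<beta> n s)) = integral {0..t} (\<lambda>s. poly G (\<lambda>_. \<beta>) s)"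
      by (rule integral_cong) (use t F(2) in \<open>auto simp: evG\<close>)
    also have "\<dots> = poly (IntP G) (\<lambda>_. \<beta>) t" by (rule poly_IntP[OF CG t, symmetric])
    finally show "it \<alpha> \<beta> (Suc n) t = poly (1 + IntP G) (\<lambda>_. \<beta>) t" by simp
  qed
qed

lemma it_holo: "(\<lambda>\<beta>. it \<alpha> \<beta> n 1) holomorphic_on UNIV" "continuous_on UNIV (\<lambda>\<beta>. it \<alpha> \<beta> n 1)"
proof -
  obtain F where F: "CC F" "\<And>\<beta> t. t \<in> {0..1} \<Longrightarrow> it \<alpha> \<beta> n t = poly F (\<lambda>_. \<beta>) t"
    using it_poly by blast
  have eq: "(\<lambda>\<beta>. it \<alpha> \<beta> n 1) = (\<lambda>\<beta>. \<Sum>i\<le>degree F. coeff F i 1 * \<beta> ^ i)"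
    by (rule ext) (simp add: F(2) poly_fun_eval)
  show "(\<lambda>\<beta>. it \<alpha> \<beta> n 1) holomorphic_on UNIV" unfolding eq by (intro holomorphic_intros)
  then show "continuous_on UNIV (\<lambda>\<beta>. it \<alpha> \<beta> n 1)" by (rule holomorphic_on_imp_continuous_on)
qed

lemma w_holo:
  assumes "norm \<alpha> \<le> 1/(27*Mp)"
  shows "(\<lambda>\<beta>. w \<alpha> \<beta> 1) holomorphic_on ball 0 (1/(12*Mq))"
proof -
  have ul: "uniform_limit (cball 0 (1/(12*Mq))) (\<lambda>n \<beta>. it \<alpha> \<beta> n 1) (\<lambda>\<beta>. w \<alpha> \<beta> 1) sequentially"
  proof (rule unif_geo)
    fix n and \<beta> :: complex assume "\<beta> \<in> cball 0 (1/(12*Mq))"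
    then have "good \<alpha> \<beta>" using assms by (simp add: good_def)
    then show "norm (it \<alpha> \<beta> n 1 - w \<alpha> \<beta> 1) \<le> (1/2)^n"
      using it_conv(2)[of \<alpha> \<beta> 1 n] by (simp add: norm_minus_commute)
  qed
  show ?thesis
    by (rule holomorphic_uniform_limit[OF _ ul])
       (auto intro!: always_eventually continuous_on_subset[OF it_holo(2)] holomorphic_on_subset[OF it_holo(1)])
qed

end



lemma ftc0t:
  fixes f :: "real \<Rightarrow> complex"
  assumes "\<And>s. s \<in> {0..1} \<Longrightarrow> (f has_vector_derivative f' s) (at s within {0..1})" "t \<in> {0..1}"
  shows "(f' has_integral (f t - f 0)) {0..t}"
proof (rule fundamental_theorem_of_calculus)
  show "0 \<le> t" using assms(2) by simp
  fix s assume s: "s \<in> {0..t}"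
  then have "s \<in> {0..1}" using assms(2) by auto
  then show "(f has_vector_derivative f' s) (at s within {0..t})"
    by (rule has_vector_derivative_within_subset[OF assms(1)]) (use assms(2) in auto)
qed

lemma small_imp_zero:
  fixes m :: complex
  assumes "r > 0" "\<And>e. 0 < e \<Longrightarrow> e < r \<Longrightarrow> norm m \<le> C * e"
  shows "m = 0"
proof (rule ccontr)
  assume m: "m \<noteq> 0"
  then have nm: "norm m > 0" by simp
  have C: "C > 0"
  proof -
    have "norm m \<le> C * (r/2)" using assms(1) by (intro assms(2)) auto
    moreover have "C \<le> 0 \<Longrightarrow> C * (r/2) \<le> 0" using assms(1) by (simp add: mult_nonpos_nonneg)
    ultimately show ?thesis using nm by fastforce
  qed
  define e where "e = min (r/2) (norm m / (2*C))"
  have e: "0 < e" "e < r" using assms(1) nm C by (auto simp: e_def min_def)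
  have "C * e \<le> norm m / 2" using C by (simp add: e_def min_def field_simps)
  then show False using assms(2)[OF e] nm by linarith
qed

locale odeloc2 = odeloc +
  fixes Pf Qf :: "real \<Rightarrow> complex"
  assumes dP: "\<And>s. s \<in> {0..1} \<Longrightarrow> (Pf has_vector_derivative pt s) (at s within {0..1})"
    and dQ: "\<And>s. s \<in> {0..1} \<Longrightarrow> (Qf has_vector_derivative qt s) (at s within {0..1})"
    and P0: "Pf 0 = 0" and P1: "Pf 1 = 0" and Q0: "Qf 0 = 0" and Q1: "Qf 1 = 0"
begin

lemma w_ne0: "good \<alpha> \<beta> \<Longrightarrow> t \<in> {0..1} \<Longrightarrow> w \<alpha> \<beta> t \<noteq> 0"
  using w_inB[of \<alpha> \<beta>] unfolding inB_def by force

lemma w_norm: "good \<alpha> \<beta> \<Longrightarrow> t \<in> {0..1} \<Longrightarrow> norm (w \<alpha> \<beta> t) \<ge> 1/2"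
proof -
  assume "good \<alpha> \<beta>" "t \<in> {0..1}"
  then have "norm (w \<alpha> \<beta> t - 1) \<le> 1/2" using w_inB[of \<alpha> \<beta>] unfolding inB_def by blast
  then show ?thesis using norm_triangle_ineq2[of 1 "w \<alpha> \<beta> t"] by (simp add: norm_minus_commute)
qed

lemma inv_w_deriv:
  assumes "good \<alpha> \<beta>" "t \<in> {0..1}"
  shows "((\<lambda>s. inverse (w \<alpha> \<beta> s)) has_vector_derivative - (\<alpha> * pt t * w \<alpha> \<beta> t + \<beta> * qt t)) (at t within {0..1})"
proof -
  have nz: "w \<alpha> \<beta> t \<noteq> 0" by (rule w_ne0[OF assms])
  have "((inverse \<circ> w \<alpha> \<beta>) has_vector_derivative Fn \<alpha> \<beta> t (w \<alpha> \<beta> t) * (- (inverse (w \<alpha> \<beta> t) ^ Suc (Suc 0)))) (at t within {0..1})"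
    by (rule field_vector_diff_chain_within[OF w_deriv[OF assms] DERIV_inverse[OF nz]])
  moreover have "Fn \<alpha> \<beta> t (w \<alpha> \<beta> t) * (- (inverse (w \<alpha> \<beta> t) ^ Suc (Suc 0))) = - (\<alpha> * pt t * w \<alpha> \<beta> t + \<beta> * qt t)"
    using nz unfolding Fn_def by (simp add: field_simps power2_eq_square power3_eq_cube)
  ultimately show ?thesis by (simp add: o_def)
qed

lemma inv_w2_deriv:
  assumes "good \<alpha> \<beta>" "t \<in> {0..1}"
  shows "((\<lambda>s. inverse (w \<alpha> \<beta> s) * inverse (w \<alpha> \<beta> s)) has_vector_derivative - 2 * (\<alpha> * pt t + \<beta> * qt t / w \<alpha> \<beta> t)) (at t within {0..1})"
proof -
  have nz: "w \<alpha> \<beta> t \<noteq> 0" by (rule w_ne0[OF assms])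
  have "((\<lambda>s. inverse (w \<alpha> \<beta> s) * inverse (w \<alpha> \<beta> s)) has_vector_derivative
     inverse (w \<alpha> \<beta> t) * (- (\<alpha> * pt t * w \<alpha> \<beta> t + \<beta> * qt t)) + (- (\<alpha> * pt t * w \<alpha> \<beta> t + \<beta> * qt t)) * inverse (w \<alpha> \<beta> t)) (at t within {0..1})"
    by (rule has_vector_derivative_mult[OF inv_w_deriv[OF assms] inv_w_deriv[OF assms]])
  moreover have "inverse (w \<alpha> \<beta> t) * (- (\<alpha> * pt t * w \<alpha> \<beta> t + \<beta> * qt t)) + (- (\<alpha> * pt t * w \<alpha> \<beta> t + \<beta> * qt t)) * inverse (w \<alpha> \<beta> t)
      = - 2 * (\<alpha> * pt t + \<beta> * qt t / w \<alpha> \<beta> t)"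
    using nz by (simp add: field_simps)
  ultimately show ?thesis by simp
qed

lemma J_a:
  assumes "good \<alpha> \<beta>"
  shows "inverse (w \<alpha> \<beta> 1) - 1 = - \<alpha> * integral {0..1} (\<lambda>s. pt s * w \<alpha> \<beta> s)"
proof -
  have d: "((\<lambda>s. inverse (w \<alpha> \<beta> s) + \<beta> * Qf s) has_vector_derivative - (\<alpha> * (pt s * w \<alpha> \<beta> s))) (at s within {0..1})"
    if "s \<in> {0..1}" for s
  proof -
    have "((\<lambda>s. inverse (w \<alpha> \<beta> s) + \<beta> * Qf s) has_vector_derivative - (\<alpha> * pt s * w \<alpha> \<beta> s + \<beta> * qt s) + \<beta> * qt s) (at s within {0..1})"
      by (intro has_vector_derivative_add inv_w_deriv[OF assms that] has_vector_derivative_mult_right dQ[OF that])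
    then show ?thesis by (simp add: algebra_simps)
  qed
  have "((\<lambda>s. - (\<alpha> * (pt s * w \<alpha> \<beta> s))) has_integral (inverse (w \<alpha> \<beta> 1) + \<beta> * Qf 1 - (inverse (w \<alpha> \<beta> 0) + \<beta> * Qf 0))) {0..1}"
    using ftc0t[OF d, of 1] by simp
  then have "((\<lambda>s. - (\<alpha> * (pt s * w \<alpha> \<beta> s))) has_integral (inverse (w \<alpha> \<beta> 1) - 1)) {0..1}"
    using Q0 Q1 w_0[OF assms] by simp
  then have "integral {0..1} (\<lambda>s. - (\<alpha> * (pt s * w \<alpha> \<beta> s))) = inverse (w \<alpha> \<beta> 1) - 1"
    by (rule integral_unique)
  moreover have "integral {0..1} (\<lambda>s. - (\<alpha> * (pt s * w \<alpha> \<beta> s))) = - \<alpha> * integral {0..1} (\<lambda>s. pt s * w \<alpha> \<beta> s)"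
    by (simp add: integral_neg integral_mult_right)
  ultimately show ?thesis by simp
qed

lemma J_b:
  assumes "good \<alpha> \<beta>"
  shows "inverse (w \<alpha> \<beta> 1) * inverse (w \<alpha> \<beta> 1) - 1 = - 2 * \<beta> * integral {0..1} (\<lambda>s. qt s / w \<alpha> \<beta> s)"
proof -
  have d: "((\<lambda>s. inverse (w \<alpha> \<beta> s) * inverse (w \<alpha> \<beta> s) + 2 * \<alpha> * Pf s) has_vector_derivative - 2 * \<beta> * (qt s / w \<alpha> \<beta> s)) (at s within {0..1})"
    if "s \<in> {0..1}" for s
  proof -
    have "((\<lambda>s. inverse (w \<alpha> \<beta> s) * inverse (w \<alpha> \<beta> s) + 2 * \<alpha> * Pf s) has_vector_derivative - 2 * (\<alpha> * pt s + \<beta> * qt s / w \<alpha> \<beta> s) + 2 * \<alpha> * pt s) (at s within {0..1})"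
      by (intro has_vector_derivative_add inv_w2_deriv[OF assms that] has_vector_derivative_mult_right dP[OF that])
    then show ?thesis by (simp add: algebra_simps)
  qed
  have "((\<lambda>s. - 2 * \<beta> * (qt s / w \<alpha> \<beta> s)) has_integral (inverse (w \<alpha> \<beta> 1) * inverse (w \<alpha> \<beta> 1) + 2 * \<alpha> * Pf 1 - (inverse (w \<alpha> \<beta> 0) * inverse (w \<alpha> \<beta> 0) + 2 * \<alpha> * Pf 0))) {0..1}"
    using ftc0t[OF d, of 1] by simp
  then have "((\<lambda>s. - 2 * \<beta> * (qt s / w \<alpha> \<beta> s)) has_integral (inverse (w \<alpha> \<beta> 1) * inverse (w \<alpha> \<beta> 1) - 1)) {0..1}"
    using P0 P1 w_0[OF assms] by simp
  then have "integral {0..1} (\<lambda>s. - 2 * \<beta> * (qt s / w \<alpha> \<beta> s)) = inverse (w \<alpha> \<beta> 1) * inverse (w \<alpha> \<beta> 1) - 1"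
    by (rule integral_unique)
  moreover have "integral {0..1} (\<lambda>s. - 2 * \<beta> * (qt s / w \<alpha> \<beta> s)) = - 2 * \<beta> * integral {0..1} (\<lambda>s. qt s / w \<alpha> \<beta> s)"
    by (rule integral_mult_right)
  ultimately show ?thesis by simp
qed

lemma J_0:
  assumes "good 0 \<beta>" "t \<in> {0..1}"
  shows "inverse (w 0 \<beta> t) = 1 - \<beta> * Qf t"
proof -
  have d: "((\<lambda>s. inverse (w 0 \<beta> s) + \<beta> * Qf s) has_vector_derivative 0) (at s within {0..1})"
    if "s \<in> {0..1}" for s
  proof -
    have "((\<lambda>s. inverse (w 0 \<beta> s) + \<beta> * Qf s) has_vector_derivative - (0 * pt s * w 0 \<beta> s + \<beta> * qt s) + \<beta> * qt s) (at s within {0..1})"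
      by (intro has_vector_derivative_add inv_w_deriv[OF assms(1) that] has_vector_derivative_mult_right dQ[OF that])
    then show ?thesis by simp
  qed
  have "((\<lambda>s. 0) has_integral (inverse (w 0 \<beta> t) + \<beta> * Qf t - (inverse (w 0 \<beta> 0) + \<beta> * Qf 0))) {0..t}"
    by (rule ftc0t[OF d assms(2)])
  then have "inverse (w 0 \<beta> t) + \<beta> * Qf t - (inverse (w 0 \<beta> 0) + \<beta> * Qf 0) = 0"
    using has_integral_unique has_integral_0 by blast
  then show ?thesis using Q0 w_0[OF assms(1)] by (simp add: algebra_simps)
qed

lemma J_0b:
  assumes "good \<alpha> 0" "t \<in> {0..1}"
  shows "inverse (w \<alpha> 0 t) * inverse (w \<alpha> 0 t) = 1 - 2 * \<alpha> * Pf t"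
proof -
  have d: "((\<lambda>s. inverse (w \<alpha> 0 s) * inverse (w \<alpha> 0 s) + 2 * \<alpha> * Pf s) has_vector_derivative 0) (at s within {0..1})"
    if "s \<in> {0..1}" for s
  proof -
    have "((\<lambda>s. inverse (w \<alpha> 0 s) * inverse (w \<alpha> 0 s) + 2 * \<alpha> * Pf s) has_vector_derivative - 2 * (\<alpha> * pt s + 0 * qt s / w \<alpha> 0 s) + 2 * \<alpha> * pt s) (at s within {0..1})"
      by (intro has_vector_derivative_add inv_w2_deriv[OF assms(1) that] has_vector_derivative_mult_right dP[OF that])
    then show ?thesis by simp
  qed
  have "((\<lambda>s. 0) has_integral (inverse (w \<alpha> 0 t) * inverse (w \<alpha> 0 t) + 2 * \<alpha> * Pf t - (inverse (w \<alpha> 0 0) * inverse (w \<alpha> 0 0) + 2 * \<alpha> * Pf 0))) {0..t}"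
    by (rule ftc0t[OF d assms(2)])
  then have "inverse (w \<alpha> 0 t) * inverse (w \<alpha> 0 t) + 2 * \<alpha> * Pf t - (inverse (w \<alpha> 0 0) * inverse (w \<alpha> 0 0) + 2 * \<alpha> * Pf 0) = 0"
    using has_integral_unique has_integral_0 by blast
  then show ?thesis using P0 w_0[OF assms(1)] by (simp add: algebra_simps)
qed

end



definition cc :: "nat \<Rightarrow> complex" where
  "cc i = ((1/2) gchoose i) * (-2)^i"

definition TT :: "nat \<Rightarrow> complex \<Rightarrow> complex" where
  "TT k x = (\<Sum>i\<le>k. cc i * x^i)"

lemma cc_0: "cc 0 = 1" by (simp add: cc_def)

lemma cc_conv: "(\<Sum>i\<le>n. cc i * cc (n - i)) = (if n = 0 then 1 else if n = 1 then -2 else 0)"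
proof -
  have "(\<Sum>i\<le>n. cc i * cc (n - i)) = (-2)^n * (\<Sum>i=0..n. ((1/2) gchoose i) * ((1/2) gchoose (n - i)))"
    unfolding cc_def sum_distrib_left atLeast0AtMost[symmetric]
    by (rule sum.cong) (auto simp: power_add[symmetric] algebra_simps)
  also have "(\<Sum>i=0..n. ((1/2::complex) gchoose i) * ((1/2) gchoose (n - i))) = 1 gchoose n"
    using gbinomial_Vandermonde[of "1/2::complex" "1/2" n] by simp
  also have "(1::complex) gchoose n = of_nat (1 choose n)"
    by (metis binomial_gbinomial of_nat_1)
  finally show ?thesis
    by (cases n) (auto simp: binomial_eq_0)
qed

lemma cc_nz: "cc k \<noteq> 0"
proof -
  have "pochhammer (- (1/2::complex)) k \<noteq> 0"
  proof
    assume "pochhammer (- (1/2::complex)) k = 0"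
    then obtain j where "- (1/2::complex) = - of_nat j" by (auto simp: pochhammer_eq_0_iff)
    then have "(1::complex) = 2 * of_nat j" by (simp add: field_simps)
    then have "(1::nat) = 2 * j" by (metis of_nat_1 of_nat_mult of_nat_numeral of_nat_eq_iff)
    then show False by presburger
  qed
  then show ?thesis unfolding cc_def gbinomial_pochhammer by simp
qed

lemma TT_sq:
  assumes "k \<ge> 1" "norm x \<le> 1"
  shows "norm (TT k x * TT k x - (1 - 2*x)) \<le> (\<Sum>i\<le>k. norm (cc i))^2 * norm x ^ (k+1)"
proof -
  let ?g = "\<lambda>i j. cc i * cc j * x^(i+j)"
  define A where "A = {..k} \<times> {..k}"
  define A1 where "A1 = {(i,j). i + j \<le> k}"
  have A1A: "A1 \<subseteq> A" unfolding A_def A1_def by auto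
  have finA: "finite A" unfolding A_def by simp
  have "TT k x * TT k x = (\<Sum>(i,j)\<in>A. ?g i j)"
    unfolding TT_def sum_product A_def sum.cartesian_product
    by (rule sum.cong) (auto simp: power_add algebra_simps)
  also have "\<dots> = (\<Sum>(i,j)\<in>A1. ?g i j) + (\<Sum>(i,j)\<in>A - A1. ?g i j)"
    using sum.subset_diff[OF A1A finA, of "\<lambda>(i,j). ?g i j"] by simp
  also have "(\<Sum>(i,j)\<in>A1. ?g i j) = (\<Sum>n\<le>k. \<Sum>i\<le>n. ?g i (n - i))"
    unfolding A1_def by (rule sum.triangle_reindex_eq)
  also have "\<dots> = (\<Sum>n\<le>k. x^n * (\<Sum>i\<le>n. cc i * cc (n - i)))"
    by (rule sum.cong[OF refl]) (auto simp: sum_distrib_left algebra_simps intro!: sum.cong)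
  also have "\<dots> = (\<Sum>n\<le>k. (if n = 0 then 1 else if n = 1 then -2 * x else 0))"
    by (rule sum.cong[OF refl]) (simp add: cc_conv)
  also have "\<dots> = (\<Sum>n\<le>k. (if n = 0 then 1 else 0)) + (\<Sum>n\<le>k. (if n = 1 then -2*x else 0))"
    by (subst sum.distrib[symmetric]) (rule sum.cong, auto)
  also have "\<dots> = 1 - 2 * x" using assms(1) by (simp add: sum.delta)
  finally have eq: "TT k x * TT k x - (1 - 2*x) = (\<Sum>(i,j)\<in>A - A1. ?g i j)" by simp
  have "norm (\<Sum>(i,j)\<in>A - A1. ?g i j) \<le> (\<Sum>(i,j)\<in>A - A1. norm (cc i) * norm (cc j) * norm x ^ (k+1))"
  proof (rule sum_norm_le)
    fix p assume p: "p \<in> A - A1"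
    obtain i j where ij: "p = (i,j)" by force
    have "k + 1 \<le> i + j" using p ij unfolding A1_def by auto
    then have "norm x ^ (i+j) \<le> norm x ^ (k+1)" by (rule power_decreasing) (use assms(2) in auto)
    then show "norm (case p of (i,j) \<Rightarrow> ?g i j) \<le> (case p of (i,j) \<Rightarrow> norm (cc i) * norm (cc j) * norm x ^ (k+1))"
      unfolding ij by (simp add: norm_mult norm_power mult_left_mono)
  qed
  also have "\<dots> \<le> (\<Sum>(i,j)\<in>A. norm (cc i) * norm (cc j) * norm x ^ (k+1))"
    by (rule sum_mono2) (use finA in auto)
  also have "\<dots> = (\<Sum>i\<le>k. norm (cc i))^2 * norm x ^ (k+1)"
    unfolding A_def sum.cartesian_product[symmetric] power2_eq_square sum_product sum_distrib_right
    by (simp add: sum_distrib_left sum_distrib_right algebra_simps)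
  finally show ?thesis unfolding eq .
qed

lemma TT_near1:
  assumes "norm x \<le> 1"
  shows "norm (TT k x - 1) \<le> (\<Sum>i\<le>k. norm (cc i)) * norm x"
proof -
  have T0: "TT k 0 = 1"
  proof -
    have "TT k 0 = (\<Sum>i\<le>k. if i = 0 then cc i else 0)"
      unfolding TT_def by (rule sum.cong) (auto simp: power_0_left)
    then show ?thesis by (simp add: sum.delta cc_0)
  qed
  have "TT k x - 1 = (\<Sum>i\<le>k. cc i * (x^i - 0^i))"
    unfolding T0[symmetric] TT_def by (simp add: sum_subtractf right_diff_distrib)
  also have "norm \<dots> \<le> (\<Sum>i\<le>k. norm (cc i) * norm x)"
  proof (rule sum_norm_le)
    fix i
    have "norm (x^i - 0^i) \<le> norm x"
    proof (cases i)
      case 0 then show ?thesis by simp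
    next
      case (Suc j)
      have "norm x ^ Suc j \<le> norm x ^ 1" by (rule power_decreasing) (use assms in auto)
      then show ?thesis using Suc by (simp add: norm_power norm_mult del: power_Suc)
    qed
    then show "norm (cc i * (x^i - 0^i)) \<le> norm (cc i) * norm x"
      by (simp add: norm_mult mult_left_mono)
  qed
  finally show ?thesis by (simp add: sum_distrib_right)
qed

lemma sqrt_approx:
  assumes "k \<ge> 1" "h * h = 1 - 2*x" "norm (h - 1) \<le> 1/2" "norm x \<le> 1"
    "(\<Sum>i\<le>k. norm (cc i)) * norm x \<le> 1/2"
  shows "norm (h - TT k x) \<le> (\<Sum>i\<le>k. norm (cc i))^2 * norm x ^ (k+1)"
proof -
  have T1: "norm (TT k x - 1) \<le> 1/2" using TT_near1[OF assms(4), of k] assms(5) by linarith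
  have "norm (h + TT k x) \<ge> 1"
  proof -
    have "h + TT k x = 2 + ((h - 1) + (TT k x - 1))" by simp
    moreover have "norm ((h - 1) + (TT k x - 1)) \<le> 1"
      using norm_triangle_ineq[of "h - 1" "TT k x - 1"] assms(3) T1 by linarith
    ultimately have "norm (h + TT k x - 2) \<le> 1" by simp
    moreover have "norm (2::complex) \<le> norm (h + TT k x) + norm (2 - (h + TT k x))"
      using norm_triangle_ineq[of "h + TT k x" "2 - (h + TT k x)"] by simp
    ultimately show ?thesis using norm_minus_commute[of 2 "h + TT k x"] by simp
  qed
  then have nz: "h + TT k x \<noteq> 0" by auto
  have "h - TT k x = - (TT k x * TT k x - (1 - 2*x)) / (h + TT k x)"
    using nz assms(2) by (simp add: field_simps)
  then have "norm (h - TT k x) = norm (- (TT k x * TT k x - (1 - 2*x))) / norm (h + TT k x)"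
    by (simp only: norm_divide)
  also have "\<dots> = norm (TT k x * TT k x - (1 - 2*x)) / norm (h + TT k x)"
    by (simp only: norm_minus_cancel)
  also have "\<dots> \<le> norm (TT k x * TT k x - (1 - 2*x))"
    using divide_left_mono[OF \<open>norm (h + TT k x) \<ge> 1\<close>, of "norm (TT k x * TT k x - (1 - 2*x))"] nz by simp
  also have "\<dots> \<le> (\<Sum>i\<le>k. norm (cc i))^2 * norm x ^ (k+1)" by (rule TT_sq[OF assms(1,4)])
  finally show ?thesis .
qed




context odeloc2
begin

lemma cPf: "continuous_on {0..1} Pf"
  unfolding continuous_on_eq_continuous_within using dP has_vector_derivative_continuous by blast

lemma cQf: "continuous_on {0..1} Qf"
  unfolding continuous_on_eq_continuous_within using dQ has_vector_derivative_continuous by blast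

lemma bound_of_cont:
  fixes f :: "real \<Rightarrow> complex"
  assumes "continuous_on {0..1} f"
  obtains M where "M \<ge> 1" "\<And>s. s \<in> {0..1} \<Longrightarrow> norm (f s) \<le> M"
proof -
  have "bounded (f ` {0..1})" by (intro compact_imp_bounded compact_continuous_image assms) simp
  then obtain b where b: "b > 0" "\<And>x. x \<in> f ` {0..1} \<Longrightarrow> norm x \<le> b" unfolding bounded_pos by blast
  show ?thesis by (rule that[of "max b 1"]) (use b in \<open>auto intro: order.trans[OF _ max.cobounded1]\<close>)
qed

lemma cw: "good \<alpha> \<beta> \<Longrightarrow> continuous_on {0..1} (w \<alpha> \<beta>)"
  using w_inB inB_def by blast

lemma lim_a:
  assumes "norm \<beta> \<le> 1/(12*Mq)" "a1 > 0" "\<And>\<alpha>::real. 0 < \<alpha> \<Longrightarrow> \<alpha> < a1 \<Longrightarrow> w (of_real \<alpha>) \<beta> 1 = 1"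
  shows "integral {0..1} (\<lambda>s. pt s * w 0 \<beta> s) = 0"
proof (rule small_imp_zero[of "min a1 (1/(27*Mp))" _ "Mp * (2 * (Mp * (27/8)))"])
  show "min a1 (1/(27*Mp)) > 0" using assms Mp1 by simp
  fix e :: real assume e: "0 < e" "e < min a1 (1/(27*Mp))"
  have g: "good (of_real e) \<beta>" "good 0 \<beta>" using e assms(1) Mp1 by (auto simp: good_def)
  have z: "integral {0..1} (\<lambda>s. pt s * w (of_real e) \<beta> s) = 0"
    using J_a[OF g(1)] assms(3)[of e] e by simp
  have i1: "(\<lambda>s. pt s * w 0 \<beta> s) integrable_on {0..1}"
    by (intro integrable_continuous_real continuous_intros cpt cw[OF g(2)])
  have i2: "(\<lambda>s. pt s * w (of_real e) \<beta> s) integrable_on {0..1}"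
    by (intro integrable_continuous_real continuous_intros cpt cw[OF g(1)])
  have "integral {0..1} (\<lambda>s. pt s * w 0 \<beta> s) = integral {0..1} (\<lambda>s. pt s * w 0 \<beta> s) - integral {0..1} (\<lambda>s. pt s * w (of_real e) \<beta> s)"
    using z by simp
  also have "\<dots> = integral {0..1} (\<lambda>s. pt s * (w 0 \<beta> s - w (of_real e) \<beta> s))"
    by (simp add: integral_diff[OF i1 i2, symmetric] algebra_simps)
  also have "norm \<dots> \<le> Mp * (2 * (Mp * (27/8))) * e"
  proof (rule integral_bound_01)
    show "continuous_on {0..1} (\<lambda>s. pt s * (w 0 \<beta> s - w (of_real e) \<beta> s))"
      by (intro continuous_intros cpt cw g)
    show "(1::real) \<in> {0..1}" by simp
    fix s :: real assume s: "s \<in> {0..1}"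
    have "norm (w 0 \<beta> s - w (of_real e) \<beta> s) \<le> 2 * pd 0 \<beta> (of_real e) \<beta>" by (rule w_stab[OF g(2) g(1) s])
    also have "\<dots> = 2 * (Mp * (27/8)) * e" using e by (simp add: pd_def)
    finally have "norm (w 0 \<beta> s - w (of_real e) \<beta> s) \<le> 2 * (Mp * (27/8)) * e" .
    then show "norm (pt s * (w 0 \<beta> s - w (of_real e) \<beta> s)) \<le> Mp * (2 * (Mp * (27/8))) * e"
      unfolding norm_mult using bp[OF s] Mp1 by (smt (verit, best) mult.assoc mult_mono norm_ge_zero)
  qed
  finally show "norm (integral {0..1} (\<lambda>s. pt s * w 0 \<beta> s)) \<le> Mp * (2 * (Mp * (27/8))) * e" .
qed

lemma lim_b:
  assumes "norm \<alpha> \<le> 1/(27*Mp)" "b1 > 0" "\<And>\<beta>::real. 0 < \<beta> \<Longrightarrow> \<beta> < b1 \<Longrightarrow> w \<alpha> (of_real \<beta>) 1 = 1"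
  shows "integral {0..1} (\<lambda>s. qt s / w \<alpha> 0 s) = 0"
proof (rule small_imp_zero[of "min b1 (1/(12*Mq))" _ "Mq * 4 * (2 * (Mq * (9/4)))"])
  show "min b1 (1/(12*Mq)) > 0" using assms Mq1 by simp
  fix e :: real assume e: "0 < e" "e < min b1 (1/(12*Mq))"
  have g: "good \<alpha> (of_real e)" "good \<alpha> 0" using e assms(1) Mq1 by (auto simp: good_def)
  have z: "integral {0..1} (\<lambda>s. qt s / w \<alpha> (of_real e) s) = 0"
    using J_b[OF g(1)] assms(3)[of e] e by simp
  have i1: "(\<lambda>s. qt s / w \<alpha> 0 s) integrable_on {0..1}"
    by (intro integrable_continuous_real continuous_intros cqt cw[OF g(2)]) (use w_ne0[OF g(2)] in auto)
  have i2: "(\<lambda>s. qt s / w \<alpha> (of_real e) s) integrable_on {0..1}"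
    by (intro integrable_continuous_real continuous_intros cqt cw[OF g(1)]) (use w_ne0[OF g(1)] in auto)
  have "integral {0..1} (\<lambda>s. qt s / w \<alpha> 0 s) = integral {0..1} (\<lambda>s. qt s / w \<alpha> 0 s) - integral {0..1} (\<lambda>s. qt s / w \<alpha> (of_real e) s)"
    using z by simp
  also have "\<dots> = integral {0..1} (\<lambda>s. qt s / w \<alpha> 0 s - qt s / w \<alpha> (of_real e) s)"
    by (simp add: integral_diff[OF i1 i2, symmetric])
  also have "norm \<dots> \<le> Mq * 4 * (2 * (Mq * (9/4))) * e"
  proof (rule integral_bound_01)
    show "continuous_on {0..1} (\<lambda>s. qt s / w \<alpha> 0 s - qt s / w \<alpha> (of_real e) s)"
      by (intro continuous_intros cqt cw g) (use w_ne0[OF g(1)] w_ne0[OF g(2)] in auto)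
    show "(1::real) \<in> {0..1}" by simp
    fix s :: real assume s: "s \<in> {0..1}"
    have "norm (w \<alpha> (of_real e) s - w \<alpha> 0 s) \<le> 2 * pd \<alpha> (of_real e) \<alpha> 0" by (rule w_stab[OF g(1) g(2) s])
    also have "\<dots> = 2 * (Mq * (9/4)) * e" using e by (simp add: pd_def)
    finally have d: "norm (w \<alpha> (of_real e) s - w \<alpha> 0 s) \<le> 2 * (Mq * (9/4)) * e" .
    have n1: "norm (w \<alpha> 0 s) \<ge> 1/2" and n2: "norm (w \<alpha> (of_real e) s) \<ge> 1/2"
      using w_norm[OF g(2) s] w_norm[OF g(1) s] by auto
    have nz1: "w \<alpha> 0 s \<noteq> 0" and nz2: "w \<alpha> (of_real e) s \<noteq> 0" using n1 n2 by auto
    have eq: "qt s / w \<alpha> 0 s - qt s / w \<alpha> (of_real e) s = qt s * (w \<alpha> (of_real e) s - w \<alpha> 0 s) / (w \<alpha> 0 s * w \<alpha> (of_real e) s)"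
      using nz1 nz2 by (simp add: field_simps)
    have pr: "norm (w \<alpha> 0 s * w \<alpha> (of_real e) s) \<ge> 1/4"
      using mult_mono[OF n1 n2] by (simp add: norm_mult)
    define nu where "nu = norm (qt s * (w \<alpha> (of_real e) s - w \<alpha> 0 s))"
    define de where "de = norm (w \<alpha> 0 s * w \<alpha> (of_real e) s)"
    have "nu * 1 \<le> nu * (4 * de)" by (rule mult_left_mono) (use pr in \<open>auto simp: de_def nu_def\<close>)
    then have "nu / de \<le> nu * 4" using pr unfolding de_def[symmetric] by (simp add: divide_le_eq algebra_simps)
    then have "norm (qt s * (w \<alpha> (of_real e) s - w \<alpha> 0 s) / (w \<alpha> 0 s * w \<alpha> (of_real e) s)) \<le> norm (qt s * (w \<alpha> (of_real e) s - w \<alpha> 0 s)) * 4"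
      unfolding nu_def de_def by (simp add: norm_divide)
    also have "\<dots> \<le> Mq * (2 * (Mq * (9/4)) * e) * 4"
      unfolding norm_mult using bq[OF s] d Mq1 by (intro mult_right_mono mult_mono) auto
    finally show "norm (qt s / w \<alpha> 0 s - qt s / w \<alpha> (of_real e) s) \<le> Mq * 4 * (2 * (Mq * (9/4))) * e"
      unfolding eq by (simp add: algebra_simps)
  qed
  finally show "norm (integral {0..1} (\<lambda>s. qt s / w \<alpha> 0 s)) \<le> Mq * 4 * (2 * (Mq * (9/4))) * e" .
qed

lemma mom_a:
  assumes r: "r > 0" and H: "\<And>\<beta>::real. 0 < \<beta> \<Longrightarrow> \<beta> < r \<Longrightarrow> integral {0..1} (\<lambda>s. pt s / (1 - of_real \<beta> * Qf s)) = 0"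
  shows "integral {0..1} (\<lambda>s. pt s * Qf s ^ k) = 0"
proof -
  obtain MQ where MQ: "MQ \<ge> 1" "\<And>s. s \<in> {0..1} \<Longrightarrow> norm (Qf s) \<le> MQ" using bound_of_cont[OF cQf] by blast
  define r' where "r' = min r (1/(3*MQ))"
  have r': "r' > 0" "r' \<le> r" using r MQ by (auto simp: r'_def)
  define R where "R k \<beta> = integral {0..1} (\<lambda>s. pt s * Qf s ^ k / (1 - of_real \<beta> * Qf s))" for k and \<beta> :: real
  define m where "m k = integral {0..1} (\<lambda>s. pt s * Qf s ^ k)" for k
  have small: "norm (of_real \<beta> * Qf s) \<le> 1/3" if "0 < \<beta>" "\<beta> < r'" "s \<in> {0..1}" for \<beta> s
  proof -
    have "norm (of_real \<beta> * Qf s) = \<beta> * norm (Qf s)" using that by (simp add: norm_mult)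
    also have "\<dots> \<le> \<beta> * MQ" using MQ(2)[OF that(3)] that by (simp add: mult_left_mono)
    also have "\<dots> \<le> (1/(3*MQ)) * MQ" using that MQ by (intro mult_right_mono) (auto simp: r'_def)
    also have "\<dots> = 1/3" using MQ by simp
    finally show ?thesis .
  qed
  have den: "norm (1 - of_real \<beta> * Qf s) \<ge> 2/3" if "0 < \<beta>" "\<beta> < r'" "s \<in> {0..1}" for \<beta> s
    using small[OF that] norm_triangle_ineq2[of 1 "of_real \<beta> * Qf s"] by simp
  have dnz: "1 - of_real \<beta> * Qf s \<noteq> 0" if "0 < \<beta>" "\<beta> < r'" "s \<in> {0..1}" for \<beta> s
    using den[OF that] by auto
  have contR: "continuous_on {0..1} (\<lambda>s. pt s * Qf s ^ k / (1 - of_real \<beta> * Qf s))" if "0 < \<beta>" "\<beta> < r'" for k \<beta>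
    by (intro continuous_intros cpt cQf) (use dnz[OF that] in auto)
  have contm: "continuous_on {0..1} (\<lambda>s. pt s * Qf s ^ k)" for k
    by (intro continuous_intros cpt cQf)
  have rec: "R k \<beta> = m k + of_real \<beta> * R (Suc k) \<beta>" if "0 < \<beta>" "\<beta> < r'" for k \<beta>
  proof -
    have "R k \<beta> = integral {0..1} (\<lambda>s. pt s * Qf s ^ k + of_real \<beta> * (pt s * Qf s ^ Suc k / (1 - of_real \<beta> * Qf s)))"
      unfolding R_def
    proof (rule integral_cong)
      fix s :: real assume s: "s \<in> {0..1}"
      show "pt s * Qf s ^ k / (1 - of_real \<beta> * Qf s) = pt s * Qf s ^ k + of_real \<beta> * (pt s * Qf s ^ Suc k / (1 - of_real \<beta> * Qf s))"
        using dnz[OF that s] by (simp add: field_simps)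
    qed
    also have "\<dots> = integral {0..1} (\<lambda>s. pt s * Qf s ^ k) + integral {0..1} (\<lambda>s. of_real \<beta> * (pt s * Qf s ^ Suc k / (1 - of_real \<beta> * Qf s)))"
    proof (rule integral_add)
      show "(\<lambda>s. pt s * Qf s ^ k) integrable_on {0..1}" by (rule integrable_continuous_real[OF contm])
      show "(\<lambda>s. of_real \<beta> * (pt s * Qf s ^ Suc k / (1 - of_real \<beta> * Qf s))) integrable_on {0..1}"
        by (rule integrable_on_mult_right, rule integrable_continuous_real[OF contR[OF that]])
    qed
    also have "\<dots> = m k + of_real \<beta> * R (Suc k) \<beta>"
      unfolding m_def R_def by (simp only: integral_mult_right)
    finally show ?thesis .
  qed
  have bndR: "norm (R k \<beta>) \<le> Mp * MQ ^ k * (3/2)" if "0 < \<beta>" "\<beta> < r'" for k \<beta>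
    unfolding R_def
  proof (rule integral_bound_01[OF contR[OF that]])
    show "(1::real) \<in> {0..1}" by simp
    fix s :: real assume s: "s \<in> {0..1}"
    have "norm (pt s * Qf s ^ k) \<le> Mp * MQ ^ k"
      unfolding norm_mult norm_power using bp[OF s] MQ(2)[OF s] Mp1
      by (intro mult_mono power_mono) auto
    moreover have "norm (1 - of_real \<beta> * Qf s) \<ge> 2/3" by (rule den[OF that s])
    ultimately have "norm (pt s * Qf s ^ k) / norm (1 - of_real \<beta> * Qf s) \<le> (Mp * MQ ^ k) / (2/3)"
      using MQ Mp1 by (intro frac_le) auto
    then show "norm (pt s * Qf s ^ k / (1 - of_real \<beta> * Qf s)) \<le> Mp * MQ ^ k * (3/2)"
      by (simp add: norm_divide)
  qed
  have step: "m k = 0 \<and> (\<forall>\<beta>. 0 < \<beta> \<and> \<beta> < r' \<longrightarrow> R (Suc k) \<beta> = 0)"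
    if Rk: "\<forall>\<beta>. 0 < \<beta> \<and> \<beta> < r' \<longrightarrow> R k \<beta> = 0" for k
  proof
    show mk: "m k = 0"
    proof (rule small_imp_zero[OF r'(1), of _ "Mp * MQ ^ Suc k * (3/2)"])
      fix e :: real assume e: "0 < e" "e < r'"
      have "m k = - (of_real e * R (Suc k) e)" using rec[OF e, of k] Rk e by (auto simp: eq_neg_iff_add_eq_0)
      then have "norm (m k) = e * norm (R (Suc k) e)" using e by (simp add: norm_mult)
      also have "\<dots> \<le> e * (Mp * MQ ^ Suc k * (3/2))" by (rule mult_left_mono[OF bndR[OF e]]) (use e in simp)
      finally show "norm (m k) \<le> Mp * MQ ^ Suc k * (3/2) * e" by (simp add: algebra_simps)
    qed
    show "\<forall>\<beta>. 0 < \<beta> \<and> \<beta> < r' \<longrightarrow> R (Suc k) \<beta> = 0"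
    proof (intro allI impI)
      fix \<beta> :: real assume b: "0 < \<beta> \<and> \<beta> < r'"
      have "R k \<beta> = m k + of_real \<beta> * R (Suc k) \<beta>" by (rule rec) (use b in auto)
      then have "of_real \<beta> * R (Suc k) \<beta> = 0" using Rk b mk by simp
      then show "R (Suc k) \<beta> = 0" using b by simp
    qed
  qed
  have all: "\<forall>\<beta>. 0 < \<beta> \<and> \<beta> < r' \<longrightarrow> R k \<beta> = 0" for k
  proof (induction k)
    case 0
    show ?case unfolding R_def using H r'(2) by auto
  next
    case (Suc k) then show ?case using step by blast
  qed
  show ?thesis using step[OF all[of k]] m_def by simp
qed

lemma mom_b:
  assumes r: "r > 0" and K: "K \<ge> 0"
    and H: "\<And>\<alpha>::real. 0 < \<alpha> \<Longrightarrow> \<alpha> < r \<Longrightarrow> \<exists>h. continuous_on {0..1} h \<and>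
       (\<forall>s\<in>{0..1}. h s * h s = 1 - 2 * of_real \<alpha> * Pf s \<and> norm (h s - 1) \<le> K * \<alpha>) \<and>
       integral {0..1} (\<lambda>s. qt s * h s) = 0"
  shows "integral {0..1} (\<lambda>s. qt s * Pf s ^ k) = 0"
proof -
  obtain MP where MP: "MP \<ge> 1" "\<And>s. s \<in> {0..1} \<Longrightarrow> norm (Pf s) \<le> MP" using bound_of_cont[OF cPf] by blast
  define m where "m k = integral {0..1} (\<lambda>s. qt s * Pf s ^ k)" for k
  have contm: "continuous_on {0..1} (\<lambda>s. qt s * Pf s ^ k)" for k
    by (intro continuous_intros cqt cPf)
  have "m k = 0"
  proof (induction k rule: less_induct)
    case (less k)
    show ?case
    proof (cases k)
      case 0
      show ?thesis
      proof (rule small_imp_zero[OF r, of _ "Mq * K"])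
        fix e :: real assume e: "0 < e" "e < r"
        obtain h where h: "continuous_on {0..1} h" "\<And>s. s \<in> {0..1} \<Longrightarrow> norm (h s - 1) \<le> K * e"
          "integral {0..1} (\<lambda>s. qt s * h s) = 0" using H[OF e] by blast
        have "m k = integral {0..1} (\<lambda>s. qt s) - integral {0..1} (\<lambda>s. qt s * h s)"
          using h(3) 0 by (simp add: m_def)
        also have "\<dots> = integral {0..1} (\<lambda>s. qt s * (1 - h s))"
          by (subst integral_diff[symmetric]) (auto intro!: integrable_continuous_real continuous_intros cqt h(1) simp: algebra_simps)
        also have "norm \<dots> \<le> Mq * (K * e)"
        proof (rule integral_bound_01)
          show "continuous_on {0..1} (\<lambda>s. qt s * (1 - h s))" by (intro continuous_intros cqt h(1))
          fix s :: real assume s: "s \<in> {0..1}"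
          show "norm (qt s * (1 - h s)) \<le> Mq * (K * e)"
            unfolding norm_mult using bq[OF s] h(2)[OF s] Mq1 by (intro mult_mono) (auto simp: norm_minus_commute)
        qed auto
        finally show "norm (m k) \<le> Mq * K * e" by (simp add: algebra_simps)
      qed
    next
      case (Suc j)
      have k1: "k \<ge> 1" using Suc by simp
      define A where "A = (\<Sum>i\<le>k. norm (cc i))"
      have A1: "A \<ge> 1" unfolding A_def using sum_mono2[of "{..k}" "{0}" "\<lambda>i. norm (cc i)"] by (simp add: cc_0)
      define r' where "r' = min r (min (1/(2*K+2)) (1/(MP*(2*A+2))))"
      have "MP*(2*A+2) > 0" using MP A1 by simp
      then have r': "r' > 0" using r K by (auto simp: r'_def)
      define C where "C = Mq * (A^2 * MP^(k+1)) / norm (cc k)"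
      show ?thesis
      proof (rule small_imp_zero[OF r', of _ C])
        fix e :: real assume e: "0 < e" "e < r'"
        have er: "e < r" using e by (simp add: r'_def)
        obtain h where h: "continuous_on {0..1} h" "\<And>s. s \<in> {0..1} \<Longrightarrow> h s * h s = 1 - 2 * of_real e * Pf s"
          "\<And>s. s \<in> {0..1} \<Longrightarrow> norm (h s - 1) \<le> K * e"
          "integral {0..1} (\<lambda>s. qt s * h s) = 0" using H[OF e(1) er] by blast
        have eK: "K * e \<le> 1/2"
        proof -
          have "e \<le> 1/(2*K+2)" using e by (simp add: r'_def)
          then have "K * e \<le> K * (1/(2*K+2))" using K by (intro mult_left_mono) auto
          also have "\<dots> \<le> 1/2" using K by (simp add: field_simps)
          finally show ?thesis .
        qed
        have eM: "e * MP \<le> 1/(2*A+2)"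
        proof -
          have "e \<le> 1/(MP*(2*A+2))" using e by (simp add: r'_def)
          then have "e * MP \<le> 1/(MP*(2*A+2)) * MP" using MP by (intro mult_right_mono) auto
          also have "\<dots> = MP / (MP * (2*A+2))" by simp
          also have "\<dots> = 1/(2*A+2)" using MP by (intro nonzero_divide_mult_cancel_left) auto
          finally show ?thesis .
        qed
        have xb: "norm (of_real e * Pf s) \<le> e * MP" if "s \<in> {0..1}" for s
          using MP(2)[OF that] e by (simp add: norm_mult mult_left_mono)
        have x1: "norm (of_real e * Pf s) \<le> 1" if "s \<in> {0..1}" for s
        proof -
          have "1/(2*A+2) \<le> (1::real)" using A1 by (simp add: field_simps)
          then show ?thesis using xb[OF that] eM by linarith
        qed
        have xA: "A * norm (of_real e * Pf s) \<le> 1/2" if "s \<in> {0..1}" for s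
        proof -
          have "A * norm (of_real e * Pf s) \<le> A * (1/(2*A+2))"
            using xb[OF that] eM A1 by (intro mult_left_mono) auto
          also have "\<dots> \<le> 1/2" using A1 by (simp add: field_simps)
          finally show ?thesis .
        qed
        have approx: "norm (h s - TT k (of_real e * Pf s)) \<le> A^2 * (e * MP)^(k+1)" if "s \<in> {0..1}" for s
        proof -
          have hh: "h s * h s = 1 - 2 * (of_real e * Pf s)" using h(2)[OF that] by (simp add: mult.assoc)
          have "norm (h s - TT k (of_real e * Pf s)) \<le> A^2 * norm (of_real e * Pf s)^(k+1)"
            unfolding A_def
            by (rule sqrt_approx[OF k1 hh _ x1[OF that] xA[OF that, unfolded A_def]])
               (use h(3)[OF that] eK in auto)
          also have "\<dots> \<le> A^2 * (e * MP)^(k+1)"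
            by (intro mult_left_mono power_mono xb that) auto
          finally show ?thesis .
        qed
        have contT: "continuous_on {0..1} (\<lambda>s. qt s * TT k (of_real e * Pf s))"
          unfolding TT_def by (intro continuous_intros cqt cPf)
        have intT: "integral {0..1} (\<lambda>s. qt s * TT k (of_real e * Pf s)) = (\<Sum>i\<le>k. cc i * of_real e ^ i * m i)"
        proof -
          have "integral {0..1} (\<lambda>s. qt s * TT k (of_real e * Pf s)) = integral {0..1} (\<lambda>s. \<Sum>i\<le>k. cc i * of_real e ^ i * (qt s * Pf s ^ i))"
            unfolding TT_def sum_distrib_left by (rule integral_cong) (auto intro!: sum.cong simp: power_mult_distrib algebra_simps)
          also have "\<dots> = (\<Sum>i\<le>k. integral {0..1} (\<lambda>s. cc i * of_real e ^ i * (qt s * Pf s ^ i)))"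
            by (rule integral_sum) (auto intro!: integrable_continuous_real continuous_intros cqt cPf)
          also have "\<dots> = (\<Sum>i\<le>k. cc i * of_real e ^ i * m i)"
            unfolding m_def by (simp add: integral_mult_right)
          finally show ?thesis .
        qed
        also have "\<dots> = cc k * of_real e ^ k * m k"
        proof -
          have "(\<Sum>i\<le>k. cc i * of_real e ^ i * m i) = (\<Sum>i\<le>j. cc i * of_real e ^ i * m i) + cc k * of_real e ^ k * m k"
            using Suc by simp
          moreover have "(\<Sum>i\<le>j. cc i * of_real e ^ i * m i) = 0"
            using less Suc by (intro sum.neutral) auto
          ultimately show ?thesis by simp
        qed
        finally have intT': "integral {0..1} (\<lambda>s. qt s * TT k (of_real e * Pf s)) = cc k * of_real e ^ k * m k" .
        have "cc k * of_real e ^ k * m k = integral {0..1} (\<lambda>s. qt s * TT k (of_real e * Pf s)) - integral {0..1} (\<lambda>s. qt s * h s)"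
          using intT' h(4) by simp
        also have "\<dots> = integral {0..1} (\<lambda>s. qt s * TT k (of_real e * Pf s) - qt s * h s)"
          by (rule integral_diff[symmetric], rule integrable_continuous_real[OF contT],
              rule integrable_continuous_real, intro continuous_intros cqt h(1))
        also have "\<dots> = integral {0..1} (\<lambda>s. qt s * (TT k (of_real e * Pf s) - h s))"
          by (simp only: right_diff_distrib)
        also have "norm \<dots> \<le> Mq * (A^2 * (e * MP)^(k+1))"
        proof (rule integral_bound_01)
          show "continuous_on {0..1} (\<lambda>s. qt s * (TT k (of_real e * Pf s) - h s))"
            unfolding TT_def by (intro continuous_intros cqt cPf h(1))
          fix s :: real assume s: "s \<in> {0..1}"
          show "norm (qt s * (TT k (of_real e * Pf s) - h s)) \<le> Mq * (A^2 * (e * MP)^(k+1))"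
            unfolding norm_mult using bq[OF s] approx[OF s] Mq1 by (intro mult_mono) (auto simp: norm_minus_commute)
        qed auto
        finally have main: "norm (cc k) * e ^ k * norm (m k) \<le> Mq * (A^2 * (e * MP)^(k+1))"
          using e by (simp add: norm_mult norm_power)
        have ccp: "norm (cc k) > 0" using cc_nz by simp
        have "norm (cc k) * e ^ k * norm (m k) \<le> (norm (cc k) * e ^ k) * (C * e)"
          using main ccp e unfolding C_def by (simp add: field_simps power_mult_distrib)
        then show "norm (m k) \<le> C * e"
          using ccp e by (simp add: mult_le_cancel_left_pos)
      qed
    qed
  qed
  then show ?thesis unfolding m_def .
qed

end



context odeloc
begin

lemma ident:
  assumes H: "\<And>\<epsilon>. \<exists>\<delta>>0. \<forall>\<mu>::real. 0 < \<mu> \<and> \<mu> < \<delta> \<and> good (of_real (\<mu>^2)) (\<epsilon> * of_real \<mu>) \<longrightarrow> w (of_real (\<mu>^2)) (\<epsilon> * of_real \<mu>) 1 = 1"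
  shows "\<exists>a1>0. \<forall>\<alpha>::real. 0 < \<alpha> \<and> \<alpha> < a1 \<longrightarrow> (\<forall>\<beta>. norm \<beta> < 1/(12*Mq) \<longrightarrow> w (of_real \<alpha>) \<beta> 1 = 1)"
proof -
  define rb where "rb = 1/(12*Mq)"
  define ra where "ra = 1/(27*Mp)"
  have rb: "rb > 0" and ra: "ra > 0" using Mp1 Mq1 by (auto simp: rb_def ra_def)
  have "\<forall>\<epsilon>. \<exists>\<delta>. \<delta> > 0 \<and> (\<forall>\<mu>::real. 0 < \<mu> \<and> \<mu> < \<delta> \<and> good (of_real (\<mu>^2)) (\<epsilon> * of_real \<mu>) \<longrightarrow> w (of_real (\<mu>^2)) (\<epsilon> * of_real \<mu>) 1 = 1)"
    using H by blast
  then obtain \<delta> where \<delta>: "\<And>\<epsilon>. \<delta> \<epsilon> > 0"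
    "\<And>\<epsilon> \<mu>. 0 < \<mu> \<Longrightarrow> \<mu> < \<delta> \<epsilon> \<Longrightarrow> good (of_real (\<mu>^2)) (\<epsilon> * of_real \<mu>) \<Longrightarrow> w (of_real (\<mu>^2)) (\<epsilon> * of_real \<mu>) 1 = 1"
    by (metis choice)
  define E where "E m = {\<epsilon> \<in> ball (0::complex) 1. 1 / real (Suc m) < \<delta> \<epsilon>}" for m
  have cover: "ball 0 1 \<subseteq> (\<Union>m. E m)"
  proof
    fix \<epsilon> :: complex assume e: "\<epsilon> \<in> ball 0 1"
    obtain n where "inverse (real (Suc n)) < \<delta> \<epsilon>" using reals_Archimedean[OF \<delta>(1)] by blast
    then show "\<epsilon> \<in> (\<Union>m. E m)" using e by (auto simp: E_def divide_inverse)
  qed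
  obtain m where inf: "infinite (E m)"
  proof (rule ccontr)
    assume "\<not> thesis"
    then have "\<forall>m. finite (E m)" using that by blast
    then have "countable (\<Union>m. E m)" by (intro countable_UN) (auto intro: countable_finite)
    then have "countable (ball (0::complex) 1)" using cover countable_subset by blast
    then show False using uncountable_ball[of 1 "0::complex"] by simp
  qed
  define l0 where "l0 = min (1 / real (Suc m)) (min (rb/2) (sqrt ra))"
  have l0: "l0 > 0" using rb ra by (simp add: l0_def)
  show ?thesis
  proof (intro exI[of _ "l0^2"] conjI allI impI)
    show "l0^2 > 0" using l0 by simp
    fix \<alpha> :: real and \<beta> :: complex
    assume a: "0 < \<alpha> \<and> \<alpha> < l0^2" and b: "norm \<beta> < 1/(12*Mq)"
    define l where "l = sqrt \<alpha>"
    have l: "l > 0" "l^2 = \<alpha>" using a by (auto simp: l_def)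
    have "l < sqrt (l0^2)" using a unfolding l_def by (intro real_sqrt_less_mono) auto
    then have ll0: "l < l0" using l0 by simp
    have l_rb: "l < rb" using ll0 rb by (simp add: l0_def)
    have l_sq: "l^2 \<le> ra"
    proof -
      have "l < sqrt ra" using ll0 by (simp add: l0_def)
      then have "l^2 < (sqrt ra)^2" using l by (intro power_strict_mono) auto
      then show ?thesis using ra by simp
    qed
    have a_ra: "norm (of_real \<alpha> :: complex) \<le> 1/(27*Mp)" using l_sq l a by (simp add: ra_def)
    define f where "f \<beta>' = w (of_real \<alpha>) \<beta>' 1 - 1" for \<beta>'
    have holf: "f holomorphic_on ball 0 rb"
      unfolding f_def rb_def by (intro holomorphic_intros w_holo[OF a_ra])
    define U where "U = (\<lambda>\<epsilon>. \<epsilon> * of_real l) ` E m"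
    have injU: "inj_on (\<lambda>\<epsilon>. \<epsilon> * (of_real l :: complex)) (E m)"
      using l by (auto simp: inj_on_def)
    have infU: "infinite U" unfolding U_def using inf finite_imageD[OF _ injU] by blast
    have UC: "U \<subseteq> cball 0 l"
    proof
      fix z assume "z \<in> U"
      then obtain \<epsilon> where e: "\<epsilon> \<in> E m" "z = \<epsilon> * of_real l" unfolding U_def by blast
      have "norm \<epsilon> < 1" using e(1) by (simp add: E_def)
      then have "norm z \<le> l" using e(2) l by (simp add: norm_mult mult_left_le_one_le)
      then show "z \<in> cball 0 l" by simp
    qed
    obtain \<xi> where \<xi>: "\<xi> \<in> cball 0 l" "\<xi> islimpt U"
      using compact_eq_Bolzano_Weierstrass[of "cball (0::complex) l"] infU UC by auto
    have CB: "cball 0 l \<subseteq> ball (0::complex) rb" using l_rb by auto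
    have fU: "f z = 0" if zU: "z \<in> U" for z
    proof -
      obtain \<epsilon> where e: "\<epsilon> \<in> E m" "z = \<epsilon> * of_real l" using zU unfolding U_def by blast
      have n\<epsilon>: "norm \<epsilon> < 1" and d: "1 / real (Suc m) < \<delta> \<epsilon>" using e(1) by (auto simp: E_def)
      have "l < \<delta> \<epsilon>" using ll0 d by (simp add: l0_def)
      moreover have "good (of_real (l^2)) (\<epsilon> * of_real l)"
      proof -
        have "norm (\<epsilon> * of_real l) \<le> l" using n\<epsilon> l by (simp add: norm_mult mult_left_le_one_le)
        then have "norm (\<epsilon> * of_real l) \<le> 1/(12*Mq)" using l_rb by (simp add: rb_def)
        moreover have "norm (of_real (l^2) :: complex) \<le> 1/(27*Mp)" using l_sq l a by (simp add: ra_def)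
        ultimately show ?thesis by (simp add: good_def)
      qed
      ultimately have "w (of_real (l^2)) (\<epsilon> * of_real l) 1 = 1" using \<delta>(2) l by blast
      then show "f z = 0" unfolding f_def e(2) using l by simp
    qed
    have "f \<beta> = 0"
      by (rule analytic_continuation[OF holf _ _ _ _ \<xi>(2) fU]) (use \<xi>(1) CB UC b rb in \<open>auto simp: rb_def\<close>)
    then show "w (of_real \<alpha>) \<beta> 1 = 1" by (simp add: f_def)
  qed
qed

end



lemma cont_poly_comp:
  fixes f :: "real \<Rightarrow> complex"
  assumes "continuous_on S f"
  shows "continuous_on S (\<lambda>x. poly p (f x))"
proof -
  have "continuous_on UNIV (poly p)"
    by (rule continuous_at_imp_continuous_on) (auto intro: DERIV_isCont[OF poly_DERIV])
  then show ?thesis using continuous_on_compose2[OF _ assms] by blast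
qed

lemma bnd01:
  fixes f :: "real \<Rightarrow> complex"
  assumes "continuous_on {0..1} f"
  obtains M where "M \<ge> 1" "\<And>s. s \<in> {0..1} \<Longrightarrow> norm (f s) \<le> M"
proof -
  have "bounded (f ` {0..1})" by (intro compact_imp_bounded compact_continuous_image assms) simp
  then obtain b where b: "b > 0" "\<And>x. x \<in> f ` {0..1} \<Longrightarrow> norm x \<le> b" unfolding bounded_pos by blast
  show ?thesis by (rule that[of "max b 1"]) (use b in \<open>auto intro: order.trans[OF _ max.cobounded1]\<close>)
qed

lemma poly_line_deriv:
  fixes P :: "complex poly" and a b :: complex
  shows "((\<lambda>s. poly P (linepath a b s)) has_vector_derivative (b - a) * poly (pderiv P) (linepath a b s)) (at s within S)"
  using field_vector_diff_chain_within[OF has_vector_derivative_linepath_within[of a b s S]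
      has_field_derivative_at_within[OF poly_DERIV[of P "linepath a b s"]]]
  by (simp add: o_def)

lemma CC_swap: "composition_condition P Q a b \<Longrightarrow> composition_condition Q P a b"
  unfolding composition_condition_def by blast

theorem theorem4p1:
  fixes a b :: complex and P Q :: "complex poly"
  assumes "a \<noteq> b"
    and "poly P a = 0" "poly P b = 0" "poly Q a = 0" "poly Q b = 0"
    and "parametric_center (pderiv P) (pderiv Q) a b"
  shows "composition_condition P Q a b \<or>
         (non_definite P a b \<and> non_definite Q a b \<and> P \<in> Zset Q a b \<and> Q \<in> Zset P a b)"
proof -
  note PC = assms(6)
  define pt where "pt s = (b - a) * poly (pderiv P) (linepath a b s)" for s
  define qt where "qt s = (b - a) * poly (pderiv Q) (linepath a b s)" for s
  define Pf where "Pf s = poly P (linepath a b s)" for s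
  define Qf where "Qf s = poly Q (linepath a b s)" for s
  have cpt: "continuous_on {0..1} pt" unfolding pt_def
    by (intro continuous_intros cont_poly_comp continuous_on_linepath)
  have cqt: "continuous_on {0..1} qt" unfolding qt_def
    by (intro continuous_intros cont_poly_comp continuous_on_linepath)
  obtain Mp where Mp: "Mp \<ge> 1" "\<And>s. s \<in> {0..1} \<Longrightarrow> norm (pt s) \<le> Mp" using bnd01[OF cpt] by blast
  obtain Mq where Mq: "Mq \<ge> 1" "\<And>s. s \<in> {0..1} \<Longrightarrow> norm (qt s) \<le> Mq" using bnd01[OF cqt] by blast
  interpret L: odeloc2 pt qt Mp Mq Pf Qf
  proof
    show "continuous_on {0..1} pt" "continuous_on {0..1} qt" "Mp \<ge> 1" "Mq \<ge> 1" by fact+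
    show "\<And>s. s \<in> {0..1} \<Longrightarrow> norm (pt s) \<le> Mp" "\<And>s. s \<in> {0..1} \<Longrightarrow> norm (qt s) \<le> Mq" using Mp Mq by auto
    show "\<And>s. s \<in> {0..1} \<Longrightarrow> (Pf has_vector_derivative pt s) (at s within {0..1})"
      unfolding Pf_def pt_def by (rule poly_line_deriv)
    show "\<And>s. s \<in> {0..1} \<Longrightarrow> (Qf has_vector_derivative qt s) (at s within {0..1})"
      unfolding Qf_def qt_def by (rule poly_line_deriv)
    show "Pf 0 = 0" "Pf 1 = 0" "Qf 0 = 0" "Qf 1 = 0" using assms(2-5) by (auto simp: Pf_def Qf_def linepath_def)
  qed
  have H: "\<exists>\<delta>>0. \<forall>\<mu>::real. 0 < \<mu> \<and> \<mu> < \<delta> \<and> L.good (of_real (\<mu>^2)) (\<epsilon> * of_real \<mu>) \<longrightarrow> L.w (of_real (\<mu>^2)) (\<epsilon> * of_real \<mu>) 1 = 1" for \<epsilon>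
  proof -
    have "abel_center (pderiv P) (pderiv Q) \<epsilon> a b" using PC by (simp add: parametric_center_def)
    then obtain \<delta> where \<delta>: "\<delta> > 0" and cen: "\<And>y :: real \<Rightarrow> complex. norm (y 0) < \<delta> \<and>
        (\<forall>t\<in>{0..1}. (y has_vector_derivative
            ((b - a) * (poly (pderiv P) (linepath a b t) * (y t)^3
                        + \<epsilon> * poly (pderiv Q) (linepath a b t) * (y t)^2))) (at t within {0..1}))
        \<Longrightarrow> y 1 = y 0"
      unfolding abel_center_def by blast
    show ?thesis
    proof (intro exI[of _ \<delta>] conjI allI impI)
      show "\<delta> > 0" by fact
      fix \<mu> :: real assume m: "0 < \<mu> \<and> \<mu> < \<delta> \<and> L.good (of_real (\<mu>^2)) (\<epsilon> * of_real \<mu>)"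
      define W where "W = L.w (of_real (\<mu>^2)) (\<epsilon> * of_real \<mu>)"
      define y where "y t = of_real \<mu> * W t" for t
      have W0: "W 0 = 1" unfolding W_def using L.w_0 m by blast
      have "y 1 = y 0"
      proof (rule cen, intro conjI ballI)
        show "norm (y 0) < \<delta>" using m W0 by (simp add: y_def)
        fix t :: real assume t: "t \<in> {0..1}"
        have "((\<lambda>t. of_real \<mu> * W t) has_vector_derivative of_real \<mu> * L.Fn (of_real (\<mu>^2)) (\<epsilon> * of_real \<mu>) t (W t)) (at t within {0..1})"
          unfolding W_def by (intro has_vector_derivative_mult_right L.w_deriv t) (use m in auto)
        moreover have "of_real \<mu> * L.Fn (of_real (\<mu>^2)) (\<epsilon> * of_real \<mu>) t (W t) =
            (b - a) * (poly (pderiv P) (linepath a b t) * (y t)^3 + \<epsilon> * poly (pderiv Q) (linepath a b t) * (y t)^2)"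
          unfolding L.Fn_def y_def pt_def qt_def by (simp add: algebra_simps power2_eq_square power3_eq_cube)
        ultimately show "(y has_vector_derivative (b - a) * (poly (pderiv P) (linepath a b t) * (y t)^3 + \<epsilon> * poly (pderiv Q) (linepath a b t) * (y t)^2)) (at t within {0..1})"
          unfolding y_def[abs_def] by simp
      qed
      then show "L.w (of_real (\<mu>^2)) (\<epsilon> * of_real \<mu>) 1 = 1" using m W0 by (simp add: y_def W_def)
    qed
  qed
  obtain a1 where a1: "a1 > 0" "\<And>\<alpha>::real. 0 < \<alpha> \<Longrightarrow> \<alpha> < a1 \<Longrightarrow> (\<forall>\<beta>. norm \<beta> < 1/(12*Mq) \<longrightarrow> L.w (of_real \<alpha>) \<beta> 1 = 1)"
    using L.ident[OF H] by blast
  have rb: "1/(12*Mq) > 0" and ra: "1/(27*Mp) > 0" using Mp Mq by auto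
  have momA: "integral {0..1} (\<lambda>s. pt s * Qf s ^ k) = 0" for k
  proof (rule L.mom_a[OF rb])
    fix \<beta> :: real assume b: "0 < \<beta>" "\<beta> < 1/(12*Mq)"
    have g0: "L.good 0 (of_real \<beta>)" using b Mp by (simp add: L.good_def)
    have "integral {0..1} (\<lambda>s. pt s * L.w 0 (of_real \<beta>) s) = 0"
      by (rule L.lim_a[OF _ a1(1)]) (use b a1(2) in auto)
    moreover have "integral {0..1} (\<lambda>s. pt s * L.w 0 (of_real \<beta>) s) = integral {0..1} (\<lambda>s. pt s / (1 - of_real \<beta> * Qf s))"
    proof (rule integral_cong)
      fix s :: real assume s: "s \<in> {0..1}"
      have "inverse (L.w 0 (of_real \<beta>) s) = 1 - of_real \<beta> * Qf s" by (rule L.J_0[OF g0 s])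
      then have "L.w 0 (of_real \<beta>) s = inverse (1 - of_real \<beta> * Qf s)" by (metis inverse_inverse_eq)
      then show "pt s * L.w 0 (of_real \<beta>) s = pt s / (1 - of_real \<beta> * Qf s)" by (simp add: divide_inverse)
    qed
    ultimately show "integral {0..1} (\<lambda>s. pt s / (1 - of_real \<beta> * Qf s)) = 0" by simp
  qed
  have w00: "L.w 0 0 t = 1" if "t \<in> {0..1}" for t
  proof -
    have "L.w 0 0 t = (\<lambda>_. 1) t"
    proof (rule L.w_unique)
      show "L.good 0 0" using Mp Mq by (simp add: L.good_def)
      show "L.inB (\<lambda>_. 1)" by (simp add: L.inB_def)
      show "\<And>t. t \<in> {0..1} \<Longrightarrow> L.T 0 0 (\<lambda>_. 1) t = 1" by (simp add: L.T_def L.Fn_def)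
    qed (use that in auto)
    then show ?thesis by simp
  qed
  have momB: "integral {0..1} (\<lambda>s. qt s * Pf s ^ k) = 0" for k
  proof (rule L.mom_b[of "min a1 (1/(27*Mp))" "Mp * 27 / 2"])
    show "min a1 (1/(27*Mp)) > 0" using a1(1) ra by simp
    show "Mp * 27 / 2 \<ge> 0" using Mp by simp
    fix \<alpha> :: real assume al: "0 < \<alpha>" "\<alpha> < min a1 (1/(27*Mp))"
    have ga: "L.good (of_real \<alpha>) 0" using al Mq by (simp add: L.good_def)
    have g00: "L.good 0 0" using Mp Mq by (simp add: L.good_def)
    show "\<exists>h. continuous_on {0..1} h \<and>
       (\<forall>s\<in>{0..1}. h s * h s = 1 - 2 * of_real \<alpha> * Pf s \<and> norm (h s - 1) \<le> Mp * 27 / 2 * \<alpha>) \<and>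
       integral {0..1} (\<lambda>s. qt s * h s) = 0"
    proof (intro exI[of _ "\<lambda>s. inverse (L.w (of_real \<alpha>) 0 s)"] conjI ballI)
      show "continuous_on {0..1} (\<lambda>s. inverse (L.w (of_real \<alpha>) 0 s))"
        by (intro continuous_intros L.cw ga) (use L.w_ne0[OF ga] in auto)
      fix s :: real assume s: "s \<in> {0..1}"
      show "inverse (L.w (of_real \<alpha>) 0 s) * inverse (L.w (of_real \<alpha>) 0 s) = 1 - 2 * of_real \<alpha> * Pf s"
        by (rule L.J_0b[OF ga s])
      have d: "norm (L.w (of_real \<alpha>) 0 s - 1) \<le> 2 * (Mp * (27/8)) * \<alpha>"
        using L.w_stab[OF ga g00 s] w00[OF s] al by (simp add: L.pd_def)
      have wn: "norm (L.w (of_real \<alpha>) 0 s) \<ge> 1/2" by (rule L.w_norm[OF ga s])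
      have nz: "L.w (of_real \<alpha>) 0 s \<noteq> 0" using wn by auto
      have "inverse (L.w (of_real \<alpha>) 0 s) - 1 = (1 - L.w (of_real \<alpha>) 0 s) / L.w (of_real \<alpha>) 0 s"
        using nz by (simp add: field_simps)
      then have "norm (inverse (L.w (of_real \<alpha>) 0 s) - 1) = norm (L.w (of_real \<alpha>) 0 s - 1) / norm (L.w (of_real \<alpha>) 0 s)"
        using nz by (simp add: norm_divide norm_minus_commute)
      also have "\<dots> \<le> norm (L.w (of_real \<alpha>) 0 s - 1) / (1/2)"
        by (rule divide_left_mono[OF wn]) (use nz in auto)
      also have "\<dots> \<le> (2 * (Mp * (27/8)) * \<alpha>) / (1/2)"
        by (rule divide_right_mono[OF d]) simp
      also have "\<dots> = Mp * 27 / 2 * \<alpha>" by simp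
      finally show "norm (inverse (L.w (of_real \<alpha>) 0 s) - 1) \<le> Mp * 27 / 2 * \<alpha>" .
    next
      have "integral {0..1} (\<lambda>s. qt s / L.w (of_real \<alpha>) 0 s) = 0"
      proof (rule L.lim_b[OF _ rb])
        show "norm (of_real \<alpha> :: complex) \<le> 1/(27*Mp)" using al by simp
        fix \<beta> :: real assume "0 < \<beta>" "\<beta> < 1/(12*Mq)"
        then show "L.w (of_real \<alpha>) (of_real \<beta>) 1 = 1" using a1(2)[of \<alpha>] al by simp
      qed
      then show "integral {0..1} (\<lambda>s. qt s * inverse (L.w (of_real \<alpha>) 0 s)) = 0"
        by (simp add: divide_inverse)
    qed
  qed
  have ZP: "P \<in> Zset Q a b"
  proof -
    have "\<forall>i. contour_integral (linepath a b) (\<lambda>x. poly (Q ^ i * pderiv P) x) = 0"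
    proof
      fix i :: nat
      have "contour_integral (linepath a b) (\<lambda>x. poly (Q ^ i * pderiv P) x) = integral {0..1} (\<lambda>s. pt s * Qf s ^ i)"
        unfolding contour_integral_integral vector_derivative_linepath_at pt_def Qf_def
        by (simp add: poly_power algebra_simps)
      then show "contour_integral (linepath a b) (\<lambda>x. poly (Q ^ i * pderiv P) x) = 0" using momA by simp
    qed
    moreover have "P \<in> vanish_ends a b" using assms by (auto simp: vanish_ends_def)
    ultimately show ?thesis unfolding Zset_def by blast
  qed
  have ZQ: "Q \<in> Zset P a b"
  proof -
    have "\<forall>i. contour_integral (linepath a b) (\<lambda>x. poly (P ^ i * pderiv Q) x) = 0"
    proof
      fix i :: nat
      have "contour_integral (linepath a b) (\<lambda>x. poly (P ^ i * pderiv Q) x) = integral {0..1} (\<lambda>s. qt s * Pf s ^ i)"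
        unfolding contour_integral_integral vector_derivative_linepath_at qt_def Pf_def
        by (simp add: poly_power algebra_simps)
      then show "contour_integral (linepath a b) (\<lambda>x. poly (P ^ i * pderiv Q) x) = 0" using momB by simp
    qed
    moreover have "Q \<in> vanish_ends a b" using assms by (auto simp: vanish_ends_def)
    ultimately show ?thesis unfolding Zset_def by blast
  qed
  have VP: "P \<in> vanish_ends a b" and VQ: "Q \<in> vanish_ends a b"
    using assms by (auto simp: vanish_ends_def)
  show ?thesis
  proof (cases "composition_condition P Q a b")
    case True then show ?thesis by simp
  next
    case False
    have "non_definite P a b"
      unfolding non_definite_def definite_def using VP VQ ZQ False by blast
    moreover have "non_definite Q a b"
      unfolding non_definite_def definite_def using VP VQ ZP False CC_swap by blast
    ultimately show ?thesis using ZP ZQ by simp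
  qed
qed


end
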